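(* For real $\theta$ such that no lower parameter below is a nonpositive integer, near $x=0$, $${}_3F_2\!\left[\begin{matrix}-\tfrac16+\tfrac{\sqrt3}3\sin\theta,\ \tfrac16+\tfrac{\sqrt3}3\sin\theta,\ \tfrac12+\tfrac{\sqrt3}3\sin\theta\\ 1+\sin(\theta+\tfrac\pi6),\ 1+\sin(\theta-\tfrac\pi6)\end{matrix}\,\Big|\,-\frac{27x}{(1-4x)^3}\right]$$ $$=(1-4x)^{-\frac12+\sqrt3\sin\theta}\;{}_4F_3\!\left[\begin{matrix}-\tfrac12+\sqrt3\sin\theta,\ -\tfrac12-\cos\theta,\ -\tfrac12+\cos\theta,\ \tfrac32+\tfrac{\sqrt3}3\sin\theta\\ 1+\sin(\theta+\tfrac\pi6),\ 1+\sin(\theta-\tfrac\pi6),\ -\tfrac12+\tfrac{\sqrt3}3\sin\theta\end{matrix}\,\Big|\,x\right].$$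
   Context: ${}_pF_q$ denotes the generalized hypergeometric series $\sum_n\frac{\prod(a_i)_n}{n!\prod(b_i)_n}x^n$, with $(c)_n$ the Pochhammer symbol. *)

theory Defs
  imports Complex_Main
begin

definition hypergeom :: "real list \<Rightarrow> real list \<Rightarrow> real \<Rightarrow> real" where
  "hypergeom as bs x =
     (\<Sum>n. prod_list (map (\<lambda>a. pochhammer a n) as)
            / (fact n * prod_list (map (\<lambda>b. pochhammer b n) bs)) * x ^ n)"

definition nonpos_int :: "real \<Rightarrow> bool" where
  "nonpos_int b \<longleftrightarrow> (\<exists>k::nat. b = - real k)"

end

theory Submission
  imports Defs "HOL-Complex_Analysis.Complex_Analysis" "HOL-Computational_Algebra.Formal_Laurent_Series"
begin

unbundle no vec_syntax

definition hc :: "real list \<Rightarrow> real list \<Rightarrow> nat \<Rightarrow> real" where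
  "hc as bs n = prod_list (map (\<lambda>a. pochhammer a n) as) / (fact n  *  prod_list (map (\<lambda>b. pochhammer b n) bs))"

lemma hypergeom_hc: "hypergeom as bs x = (\<Sum>n. hc as bs n  *  x^n)"
  by (simp add: hypergeom_def hc_def)

lemma hc_0: "hc as bs 0 = 1"
  by (induction as; induction bs) (simp_all add: hc_def)

lemma prod_list_map_mult: fixes f g :: "'b \<Rightarrow> 'a::comm_monoid_mult" shows "prod_list (map (\<lambda>a. f a  *  g a) xs) = prod_list (map f xs)  *  prod_list (map g xs)"
  by (induction xs) (simp_all add: mult_ac)

lemma pochhammer_nz: "\<not> nonpos_int b \<Longrightarrow> pochhammer b n \<noteq> (0::real)"
  by (auto simp: pochhammer_eq_0_iff nonpos_int_def)

lemma shift_nz: "\<not> nonpos_int b \<Longrightarrow> b + real n \<noteq> 0"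
  unfolding nonpos_int_def by (metis add.commute add_eq_0_iff2 minus_equation_iff)

lemma hc_Suc:
  assumes "\<forall>b\<in>set bs. \<not> nonpos_int b"
  shows "hc as bs (Suc n)  *  (real (Suc n)  *  prod_list (map (\<lambda>b. b + real n) bs))
         = hc as bs n  *  prod_list (map (\<lambda>a. a + real n) as)"
proof -
  have p1: "prod_list (map (\<lambda>b. pochhammer b n) bs) \<noteq> 0"
    using assms pochhammer_nz by (auto simp: prod_list_zero_iff)
  have p2: "prod_list (map (\<lambda>b. b + real n) bs) \<noteq> 0"
    using assms shift_nz by (auto simp: prod_list_zero_iff)
  have e: "\<And>xs. prod_list (map (\<lambda>a. pochhammer a (Suc n)) xs) = prod_list (map (\<lambda>a. pochhammer a n) xs)  *  prod_list (map (\<lambda>a. a + real n) xs)"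
    by (simp add: pochhammer_Suc prod_list_map_mult)
  show ?thesis unfolding hc_def e using p1 p2
    by (simp add: field_simps fact_Suc del: of_nat_Suc)
qed

lemma ev_ratio: "eventually (\<lambda>n. \<bar>real n + a\<bar> \<le> 2  *  \<bar>real n + b\<bar>) sequentially"
proof -
  obtain N :: nat where N: "real N \<ge> \<bar>a\<bar> + 2 * \<bar>b\<bar>" by (meson real_arch_simple)
  show ?thesis unfolding eventually_sequentially
  proof (intro exI allI impI)
    fix n assume "n \<ge> N"
    hence "real n \<ge> \<bar>a\<bar> + 2 * \<bar>b\<bar>" using N by linarith
    thus "\<bar>real n + a\<bar> \<le> 2  *  \<bar>real n + b\<bar>" by (cases "b \<ge> 0"; cases "a \<ge> 0") (auto simp: abs_if)
  qed
qed

lemma radius_pos: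
  fixes f :: "nat \<Rightarrow> real"
  assumes K: "K > 0" and ev: "eventually (\<lambda>n. \<bar>f (Suc n)\<bar> \<le> K  *  \<bar>f n\<bar>) sequentially"
  shows "fps_conv_radius (Abs_fps (\<lambda>n. complex_of_real (f n))) > 0"
proof -
  obtain N where N: "\<And>n. n \<ge> N \<Longrightarrow> \<bar>f (Suc n)\<bar> \<le> K  *  \<bar>f n\<bar>" using ev unfolding eventually_sequentially by blast
  define r where "r = 1/(2 * K)"
  have r: "r > 0" "K  *  r = 1/2" using K by (auto simp: r_def)
  have "summable (\<lambda>n. complex_of_real (f n)  *  complex_of_real r ^ n)"
  proof (rule summable_ratio_test[of "1/2" N])
    fix n assume "n \<ge> N"
    have "norm (complex_of_real (f (Suc n))  *  complex_of_real r ^ Suc n) = \<bar>f (Suc n)\<bar>  *  r ^ Suc n"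
      using r by (simp add: norm_mult norm_power)
    also have "\<dots> \<le> (K  *  \<bar>f n\<bar>)  *  r ^ Suc n"
      using N[OF \<open>n \<ge> N\<close>] r by (intro mult_right_mono) auto
    also have "\<dots> = (K * r)  *  (\<bar>f n\<bar>  *  r^n)" by (simp add: algebra_simps)
    also have "\<dots> = 1/2  *  norm (complex_of_real (f n)  *  complex_of_real r ^ n)"
      using r by (simp add: norm_mult norm_power)
    finally show "norm (complex_of_real (f (Suc n))  *  complex_of_real r ^ Suc n) \<le> 1/2  *  norm (complex_of_real (f n)  *  complex_of_real r ^ n)" .
  qed simp
  hence "conv_radius (\<lambda>n. complex_of_real (f n)) \<ge> norm (complex_of_real r)"
    by (rule conv_radius_geI)
  hence "conv_radius (\<lambda>n. complex_of_real (f n)) \<ge> ereal r" using r by simp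
  thus ?thesis using r unfolding fps_conv_radius_def by (simp add: less_le_trans[of 0 "ereal r"])
qed

locale dering =
  fixes th :: "'a::field_char_0 \<Rightarrow> 'a"
  assumes th_add: "\<And>a b. th (a + b) = th a + th b"
      and th_mul: "\<And>a b. th (a  *  b) = th a  *  b + a  *  th b"
      and th_num: "\<And>n. th (numeral n) = 0" and th_1: "th 1 = 0"
begin
lemma th0: "th 0 = 0" using th_add[of 0 0] by simp
lemma thneg: "th (-a) = - th a" using th_add[of a "-a"] th0 by (simp add: eq_neg_iff_add_eq_0 add.commute)
lemma thdiff: "th (a - b) = th a - th b" using th_add[of a "-b"] thneg[of b] by simp
lemma thdiv: "b \<noteq> 0 \<Longrightarrow> th (a / b) = (th a  *  b - a  *  th b) / b^2"
proof -
  assume b: "b \<noteq> 0"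
  have "th a = th (a/b  *  b)" using b by simp
  also have "\<dots> = th (a/b)  *  b + a/b  *  th b" by (rule th_mul)
  finally show "th (a / b) = (th a  *  b - a  *  th b) / b^2" using b by (simp add: field_simps power2_eq_square)
qed
lemma thpow: "th (a ^ n) = of_nat n  *  a^(n-1)  *  th a"
  by (induction n) (auto simp: th_mul th_1 algebra_simps power_eq_if)
lemmas rules = th_add th_mul th_num th_1 th0 thneg thdiff thpow

lemma at_Tgen: fixes vv w t N ss e k :: "'b::field" assumes "vv \<noteq> 0" "t * w = k * e"
  shows "w/vv * (t * N + e * ss) = e * ((w * ss + k * N)/vv)"
proof -
  have "w/vv * (t * N + e * ss) = ((t * w) * N + e * (w * ss))/vv" using assms(1) by (simp add: field_simps)
  also have "\<dots> = e * ((w * ss + k * N)/vv)" unfolding assms(2) using assms(1) by (simp add: field_simps)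
  finally show ?thesis .
qed
lemma at_Tgen2: fixes vv w N D ss d c x k e :: "'b::field" assumes "vv \<noteq> 0" "D \<noteq> 0" "d * vv = c * x * D"
  shows "e * ((w * ((ss * D - N * d)/D^2) + k * (N/D))/vv) = e * ((w * (vv * ss - c * x * N) + k * vv * N)/(vv^2 * D))"
proof -
  have d: "d = c * x * D/vv" using assms(1,3) by (simp add: field_simps)
  show ?thesis unfolding d using assms(1,2) by (simp add: field_simps power2_eq_square)
qed
lemma at_fg: fixes vv w x n1 n2 n3 ss p a b c g :: "'b::field"
  assumes "vv \<noteq> 0" "w \<noteq> 0"
  shows "((n3/vv^6) + ss * (n2/vv^4) + p * (n1/vv^2) - (-27 * x/w^3) * ((n3/vv^6) + a * (n2/vv^4) + b * (n1/vv^2) + c * (g/vv^0)))  *  vv^3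
   = (w^3 * (n3 + ss * n2 * vv^2 + p * n1 * vv^4) + 27 * x * (n3 + a * n2 * vv^2 + b * n1 * vv^4 + c * g * vv^6)) / (vv^3 * w^3)"
  using assms by (simp add: field_simps) algebra
lemma at_div: fixes A B C :: "'b::field" assumes "C \<noteq> 0" "A = R * C" shows "A/C = R"
  using assms by simp

lemma at_Z: fixes vv w x :: "'b::field" assumes "vv \<noteq> 0" "w \<noteq> 0" "vv = w + 12 * x"
  shows "w/vv * ((-27 * x * w^3 - (-27 * x) * (3 * w^2 * (-4 * x)))/(w^3)^2) = -27 * x/w^3"
proof -
  have n: "-27 * x * w^3 - (-27 * x) * (3 * w^2 * (-4 * x)) = (-27 * x * w^2) * vv" unfolding assms(3) by algebra
  show ?thesis unfolding n using assms(1,2) by (simp add: field_simps, (algebra)?)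
qed

lemma Zkey: assumes thx: "th x = x" and nz: "1+8 * x \<noteq> 0" "1-4 * x \<noteq> 0"
  shows "(1-4 * x)/(1+8 * x)  *  th (-27 * x/(1-4 * x)^3) = -27 * x/(1-4 * x)^3"
proof -
  have w3: "(1-4 * x)^3 \<noteq> 0" using nz by simp
  have tw: "th ((1-4 * x)^3) = 3 * (1-4 * x)^2 * (-4 * x)" by (simp add: thpow rules thx)
  have tx: "th (-27 * x) = -27 * x" by (simp add: rules thx)
  have e: "th (-27 * x/(1-4 * x)^3) = (-27 * x * (1-4 * x)^3 - (-27 * x) * (3 * (1-4 * x)^2 * (-4 * x)))/((1-4 * x)^3)^2"
    unfolding thdiv[OF w3] tw tx ..
  have eq: "1+8 * x = (1-4 * x) + 12 * x" by simp
  show ?thesis unfolding e by (rule at_Z[OF nz(1) nz(2) eq])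
qed

context
  fixes x u e gA gB gC gD gE :: 'a and T
  assumes th_u: "th u = 0"
      and th_x: "th x = x" and th_e: "th e = -4 * (3 * u - 1/2) * x * e/(1-4 * x)"
      and th_gA: "th gA = gB" and th_gB: "th gB = gC" and th_gC: "th gC = gD" and th_gD: "th gD = gE"
      and nz1: "1+8 * x \<noteq> 0" and nz2: "1-4 * x \<noteq> 0"
      and TT: "\<And>h. T h = (1-4 * x)/(1+8 * x)  *  th h"
begin
lemma the': "th e  *  (1-4 * x) = (-4 * (3 * u - 1/2) * x) * e" using nz2 th_e by simp
lemma Tgen: "T (e * N) = e  *  (((1-4 * x) * th N + (-4 * (3 * u - 1/2) * x) * N)/(1+8 * x))"
  unfolding TT th_mul by (rule at_Tgen[OF nz1 the'])
lemma Tgen2: assumes "th ((1+8 * x)^a)  *  (1+8 * x) = c * x * (1+8 * x)^a"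
  shows "T (e * (N/(1+8 * x)^a)) = e * (((1-4 * x) * ((1+8 * x) * th N - c * x * N) + (-4 * (3 * u - 1/2) * x) * (1+8 * x) * N)/(1+8 * x)^(a+2))"
proof -
  have D: "(1+8 * x)^a \<noteq> 0" using nz1 by simp
  have "T (e * (N/(1+8 * x)^a)) = e * (((1-4 * x) * ((1+8 * x) * th N - c * x * N) + (-4 * (3 * u - 1/2) * x) * (1+8 * x) * N)/((1+8 * x)^2 * (1+8 * x)^a))"
    unfolding Tgen thdiv[OF D] by (rule at_Tgen2[OF nz1 D assms])
  also have "(1+8 * x)^2 * (1+8 * x)^a = (1+8 * x)^(a+2)" by (metis power_add mult.commute)
  finally show ?thesis .
qed
lemma thD0: "th ((1+8 * x)^0)  *  (1+8 * x) = 0 * x * (1+8 * x)^0" by (simp add: th_1)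
lemma thD2: "th ((1+8 * x)^2)  *  (1+8 * x) = 16 * x * (1+8 * x)^2" by (simp add: rules th_x) algebra
lemma thD4: "th ((1+8 * x)^4)  *  (1+8 * x) = 32 * x * (1+8 * x)^4" by (simp add: rules th_x) algebra
lemma step1: "T (e * (gA/(1+8 * x)^0)) = e  *  (((2 * x + (-12) * x * u + 16 * x^2 + (-96) * x^2 * u) * gA + (1 + 4 * x + (-32) * x^2) * gB)/(1+8 * x)^2)"
proof -
  have h: "(1-4 * x) * ((1+8 * x) * th gA - 0 * x * gA) + (-4 * (3 * u - 1/2) * x) * (1+8 * x) * gA = (2 * x + (-12) * x * u + 16 * x^2 + (-96) * x^2 * u) * gA + (1 + 4 * x + (-32) * x^2) * gB"
    by (simp add: rules th_u th_x th_gA th_gB th_gC th_gD) algebra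
  have p: "(0::nat)+2 = 2" by simp
  show ?thesis by (rule Tgen2[OF thD0, of gA, unfolded h p])
qed
lemma step2: "T (e * (((2 * x + (-12) * x * u + 16 * x^2 + (-96) * x^2 * u) * gA + (1 + 4 * x + (-32) * x^2) * gB)/(1+8 * x)^2)) = e  *  (((2 * x + (-12) * x * u + 12 * x^2 + (-96) * x^2 * u + 144 * x^2 * u^2 + (-384) * x^3 * u + 2304 * x^3 * u^2 + 256 * x^4 + (-3072) * x^4 * u + 9216 * x^4 * u^2) * gA + ((-8) * x + (-24) * x * u + (-288) * x^2 * u + 384 * x^3 + (-1024) * x^4 + 6144 * x^4 * u) * gB + (1 + 8 * x + (-48) * x^2 + (-256) * x^3 + 1024 * x^4) * gC)/(1+8 * x)^4)"
proof -
  have h: "(1-4 * x) * ((1+8 * x) * th ((2 * x + (-12) * x * u + 16 * x^2 + (-96) * x^2 * u) * gA + (1 + 4 * x + (-32) * x^2) * gB) - 16 * x * ((2 * x + (-12) * x * u + 16 * x^2 + (-96) * x^2 * u) * gA + (1 + 4 * x + (-32) * x^2) * gB)) + (-4 * (3 * u - 1/2) * x) * (1+8 * x) * ((2 * x + (-12) * x * u + 16 * x^2 + (-96) * x^2 * u) * gA + (1 + 4 * x + (-32) * x^2) * gB) = (2 * x + (-12) * x * u + 12 * x^2 + (-96) * x^2 * u + 144 * x^2 * u^2 + (-384) * x^3 * u + 2304 * x^3 * u^2 + 256 * x^4 + (-3072) * x^4 * u + 9216 * x^4 * u^2) * gA + ((-8) * x + (-24) * x * u + (-288) * x^2 * u +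 384 * x^3 + (-1024) * x^4 + 6144 * x^4 * u) * gB + (1 + 8 * x + (-48) * x^2 + (-256) * x^3 + 1024 * x^4) * gC"
    by (simp add: rules th_u th_x th_gA th_gB th_gC th_gD) algebra
  have p: "(2::nat)+2 = 4" by simp
  show ?thesis by (rule Tgen2[OF thD2, of "(2 * x + (-12) * x * u + 16 * x^2 + (-96) * x^2 * u) * gA + (1 + 4 * x + (-32) * x^2) * gB", unfolded h p])
qed
lemma step3: "T (e * (((2 * x + (-12) * x * u + 12 * x^2 + (-96) * x^2 * u + 144 * x^2 * u^2 + (-384) * x^3 * u + 2304 * x^3 * u^2 + 256 * x^4 + (-3072) * x^4 * u + 9216 * x^4 * u^2) * gA + ((-8) * x + (-24) * x * u + (-288) * x^2 * u + 384 * x^3 + (-1024) * x^4 + 6144 * x^4 * u) * gB + (1 + 8 * x + (-48) * x^2 + (-256) * x^3 + 1024 * x^4) * gC)/(1+8 * x)^4)) = e  *  (((2 * x + (-12) * x * u + (-28) * x^2 + 96 * x^2 * u + 432 * x^2 * u^2 + (-40) * x^3 + (-720) * x^3 * u + 6048 * x^3 * u^2 + (-1728) * x^3 * u^3 + 1984 * x^4 + (-14208) * x^4 * u + 20736 * x^4 * u^2 + (-41472) * x^4 * u^3 + (-3584) * x^5 + 21504 * x^5 * u + 55296 * x^5 * u^2 + (-331776) * x^5 * u^3 + 4096 * x^6 + (-73728) * x^6 * u + 442368 * x^6 * u^2 + (-884736) * x^6 * u^3) * gA + ((-6) * x + (-36) * x * u + 228 * x^2 + 432 * x^2 * u^2 +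 240 * x^3 + 4032 * x^3 * u + 8640 * x^3 * u^2 + (-11136) * x^4 + (-4608) * x^4 * u + 41472 * x^4 * u^2 + 33792 * x^5 + (-110592) * x^5 * u + (-110592) * x^5 * u^2 + (-24576) * x^6 + 294912 * x^6 * u + (-884736) * x^6 * u^2) * gB + ((-30) * x + (-36) * x * u + (-192) * x^2 + (-576) * x^2 * u + 1824 * x^3 + (-576) * x^3 * u + 5376 * x^4 + 23040 * x^4 * u + (-43008) * x^5 + 36864 * x^5 * u + 49152 * x^6 + (-294912) * x^6 * u) * gC + (1 + 12 * x + (-48) * x^2 + (-704) * x^3 + 1536 * x^4 + 12288 * x^5 + (-32768) * x^6) * gD)/(1+8 * x)^6)"
proof -
  have h: "(1-4 * x) * ((1+8 * x) * th ((2 * x + (-12) * x * u + 12 * x^2 + (-96) * x^2 * u + 144 * x^2 * u^2 + (-384) * x^3 * u + 2304 * x^3 * u^2 + 256 * x^4 + (-3072) * x^4 * u + 9216 * x^4 * u^2) * gA + ((-8) * x + (-24) * x * u + (-288) * x^2 * u + 384 * x^3 + (-1024) * x^4 + 6144 * x^4 * u) * gB + (1 + 8 * x + (-48) * x^2 + (-256) * x^3 + 1024 * x^4) * gC) - 32 * x * ((2 * x + (-12) * x * u + 12 * x^2 + (-96) * x^2 * u + 144 * x^2 * u^2 + (-384) * x^3 * u + 2304 * x^3 * u^2 + 256 * x^4 + (-3072) * x^4 * u + 9216 * x^4 * u^2) * gA + ((-8) * x + (-24) * x * u + (-288) * x^2 * u + 384 * x^3 + (-1024) * x^4 + 6144 *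 x^4 * u) * gB + (1 + 8 * x + (-48) * x^2 + (-256) * x^3 + 1024 * x^4) * gC)) + (-4 * (3 * u - 1/2) * x) * (1+8 * x) * ((2 * x + (-12) * x * u + 12 * x^2 + (-96) * x^2 * u + 144 * x^2 * u^2 + (-384) * x^3 * u + 2304 * x^3 * u^2 + 256 * x^4 + (-3072) * x^4 * u + 9216 * x^4 * u^2) * gA + ((-8) * x + (-24) * x * u + (-288) * x^2 * u + 384 * x^3 + (-1024) * x^4 + 6144 * x^4 * u) * gB + (1 + 8 * x + (-48) * x^2 + (-256) * x^3 + 1024 * x^4) * gC) = (2 * x + (-12) * x * u + (-28) * x^2 + 96 * x^2 * u + 432 * x^2 * u^2 + (-40) * x^3 + (-720) * x^3 * u + 6048 * x^3 * u^2 + (-1728) * x^3 * u^3 + 1984 * x^4 + (-14208) * x^4 * u + 20736 * x^4 * u^2 + (-41472) * x^4 * u^3 + (-3584) * x^5 + 21504 * x^5 * u + 55296 * x^5 * u^2 + (-331776) * x^5 * u^3 + 4096 * x^6 + (-73728) * x^6 * u + 442368 * x^6 * u^2 + (-884736) * x^6 * u^3) * gA + ((-6) * x + (-36) * x * u + 228 * x^2 + 432 * x^2 * u^2 + 240 * x^3 + 4032 * x^3 * u + 8640 * x^3 * u^2 + (-11136) * x^4 + (-4608) * x^4 * u + 41472 * x^4 * u^2 + 33792 * x^5 + (-110592) * x^5 * u + (-110592) * x^5 * u^2 + (-24576) * x^6 + 294912 * x^6 * u + (-884736) * x^6 * u^2) * gB + ((-30) * x + (-36) * x * u + (-192) * x^2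 + (-576) * x^2 * u + 1824 * x^3 + (-576) * x^3 * u + 5376 * x^4 + 23040 * x^4 * u + (-43008) * x^5 + 36864 * x^5 * u + 49152 * x^6 + (-294912) * x^6 * u) * gC + (1 + 12 * x + (-48) * x^2 + (-704) * x^3 + 1536 * x^4 + 12288 * x^5 + (-32768) * x^6) * gD"
    by (simp add: rules th_u th_x th_gA th_gB th_gC th_gD) algebra
  have p: "(4::nat)+2 = 6" by simp
  show ?thesis by (rule Tgen2[OF thD4, of "(2 * x + (-12) * x * u + 12 * x^2 + (-96) * x^2 * u + 144 * x^2 * u^2 + (-384) * x^3 * u + 2304 * x^3 * u^2 + 256 * x^4 + (-3072) * x^4 * u + 9216 * x^4 * u^2) * gA + ((-8) * x + (-24) * x * u + (-288) * x^2 * u + 384 * x^3 + (-1024) * x^4 + 6144 * x^4 * u) * gB + (1 + 8 * x + (-48) * x^2 + (-256) * x^3 + 1024 * x^4) * gC", unfolded h p])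
qed
lemma final_poly: "(1-4 * x)^3 * (((2 * x + (-12) * x * u + (-28) * x^2 + 96 * x^2 * u + 432 * x^2 * u^2 + (-40) * x^3 + (-720) * x^3 * u + 6048 * x^3 * u^2 + (-1728) * x^3 * u^3 + 1984 * x^4 + (-14208) * x^4 * u + 20736 * x^4 * u^2 + (-41472) * x^4 * u^3 + (-3584) * x^5 + 21504 * x^5 * u + 55296 * x^5 * u^2 + (-331776) * x^5 * u^3 + 4096 * x^6 + (-73728) * x^6 * u + 442368 * x^6 * u^2 + (-884736) * x^6 * u^3) * gA + ((-6) * x + (-36) * x * u + 228 * x^2 + 432 * x^2 * u^2 + 240 * x^3 + 4032 * x^3 * u + 8640 * x^3 * u^2 + (-11136) * x^4 + (-4608) * x^4 * u + 41472 * x^4 * u^2 + 33792 * x^5 + (-110592) * x^5 * u + (-110592) * x^5 * u^2 + (-24576) * x^6 + 294912 * x^6 * u + (-884736) * x^6 * u^2) * gB + ((-30) * x + (-36) * x * u + (-192) * x^2 + (-576) * x^2 * u + 1824 * x^3 + (-576) * x^3 * u + 5376 * x^4 + 23040 * x^4 * u + (-43008) * x^5 + 36864 * x^5 * u + 49152 * x^6 + (-294912) * x^6 * u) * gC + (1 + 12 * x + (-48) * x^2 + (-704) * x^3 + 1536 * x^4 + 12288 * x^5 + (-32768) * x^6) * gD) + (3 * u) * ((2 * x + (-12) * x * u + 12 * x^2 + (-96) * x^2 * u + 144 * x^2 * u^2 + (-384) * x^3 * u + 2304 * x^3 * u^2 + 256 * x^4 + (-3072) * x^4 * u + 9216 *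 x^4 * u^2) * gA + ((-8) * x + (-24) * x * u + (-288) * x^2 * u + 384 * x^3 + (-1024) * x^4 + 6144 * x^4 * u) * gB + (1 + 8 * x + (-48) * x^2 + (-256) * x^3 + 1024 * x^4) * gC) * (1+8 * x)^2 + (3 * u^2-1/4) * ((2 * x + (-12) * x * u + 16 * x^2 + (-96) * x^2 * u) * gA + (1 + 4 * x + (-32) * x^2) * gB) * (1+8 * x)^4) + 27 * x * (((2 * x + (-12) * x * u + (-28) * x^2 + 96 * x^2 * u + 432 * x^2 * u^2 + (-40) * x^3 + (-720) * x^3 * u + 6048 * x^3 * u^2 + (-1728) * x^3 * u^3 + 1984 * x^4 + (-14208) * x^4 * u + 20736 * x^4 * u^2 + (-41472) * x^4 * u^3 + (-3584) * x^5 + 21504 * x^5 * u + 55296 * x^5 * u^2 + (-331776) * x^5 * u^3 + 4096 * x^6 + (-73728) * x^6 * u + 442368 * x^6 * u^2 + (-884736) * x^6 * u^3) * gA + ((-6) * x + (-36) * x * u + 228 * x^2 + 432 * x^2 * u^2 + 240 * x^3 + 4032 * x^3 * u + 8640 * x^3 * u^2 + (-11136) * x^4 + (-4608) * x^4 * u + 41472 * x^4 * u^2 + 33792 * x^5 + (-110592) * x^5 * u + (-110592) * x^5 * u^2 + (-24576) * x^6 + 294912 * x^6 * u + (-884736) * x^6 * u^2) * gB + ((-30) * x + (-36) * x * u + (-192) * x^2 + (-576) * x^2 * u + 1824 * x^3 + (-576) * x^3 * u + 5376 * x^4 + 23040 * x^4 * u + (-43008) * x^5 + 36864 * x^5 *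 u + 49152 * x^6 + (-294912) * x^6 * u) * gC + (1 + 12 * x + (-48) * x^2 + (-704) * x^3 + 1536 * x^4 + 12288 * x^5 + (-32768) * x^6) * gD) + (3 * u+1/2) * ((2 * x + (-12) * x * u + 12 * x^2 + (-96) * x^2 * u + 144 * x^2 * u^2 + (-384) * x^3 * u + 2304 * x^3 * u^2 + 256 * x^4 + (-3072) * x^4 * u + 9216 * x^4 * u^2) * gA + ((-8) * x + (-24) * x * u + (-288) * x^2 * u + 384 * x^3 + (-1024) * x^4 + 6144 * x^4 * u) * gB + (1 + 8 * x + (-48) * x^2 + (-256) * x^3 + 1024 * x^4) * gC) * (1+8 * x)^2 + (3 * u^2+u-1/36) * ((2 * x + (-12) * x * u + 16 * x^2 + (-96) * x^2 * u) * gA + (1 + 4 * x + (-32) * x^2) * gB) * (1+8 * x)^4 + ((u-1/6) * (u+1/6) * (u+1/2)) * gA * (1+8 * x)^6) = (((9/8) * x + (-15/4) * x * u + (-33/2) * x * u^2 + (-9) * x * u^3 + (-18) * x^2 + 132 * x^2 * u + (-120) * x^2 * u^2 + (-144) * x^2 * u^3 + (-24) * x^3 + 144 * x^3 * u + 96 * x^3 * u^2 + (-576) * x^3 * u^3) * gA + ((-1/4) + 3 * u^2 + (-39/4) * x + (-33) * x * u + 45 * x * u^2 + 84 * x^2 + (-240) * x^2 * u + 144 * x^2 * u^2 + 16 * x^3 + 192 * x^3 * u + (-192) * x^3 * u^2) * gB + (3 * u + (-33/2) * x + 45 * x * u + (-120) * x^2 + 144 * x^2 * u + 96 * x^3 +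 (-192) * x^3 * u) * gC + (1 + 15 * x + 48 * x^2 + (-64) * x^3) * gD) * ((1+8 * x)^3 * (1-4 * x)^3)"
  by algebra
lemma final: "((((2 * x + (-12) * x * u + (-28) * x^2 + 96 * x^2 * u + 432 * x^2 * u^2 + (-40) * x^3 + (-720) * x^3 * u + 6048 * x^3 * u^2 + (-1728) * x^3 * u^3 + 1984 * x^4 + (-14208) * x^4 * u + 20736 * x^4 * u^2 + (-41472) * x^4 * u^3 + (-3584) * x^5 + 21504 * x^5 * u + 55296 * x^5 * u^2 + (-331776) * x^5 * u^3 + 4096 * x^6 + (-73728) * x^6 * u + 442368 * x^6 * u^2 + (-884736) * x^6 * u^3) * gA + ((-6) * x + (-36) * x * u + 228 * x^2 + 432 * x^2 * u^2 + 240 * x^3 + 4032 * x^3 * u + 8640 * x^3 * u^2 + (-11136) * x^4 + (-4608) * x^4 * u + 41472 * x^4 * u^2 + 33792 * x^5 + (-110592) * x^5 * u + (-110592) * x^5 * u^2 + (-24576) * x^6 + 294912 * x^6 * u + (-884736) * x^6 * u^2) * gB + ((-30) * x + (-36) * x * u + (-192) * x^2 + (-576) * x^2 * u + 1824 * x^3 + (-576) * x^3 * u + 5376 * x^4 + 23040 * x^4 * u + (-43008) * x^5 + 36864 * x^5 * u + 49152 * x^6 + (-294912) * x^6 * u) * gC + (1 + 12 * x + (-48) * x^2 + (-704) * x^3 + 1536 * x^4 + 12288 * x^5 + (-32768) * x^6) * gD)/(1+8 * x)^6) + (3 * u) * (((2 * x + (-12) * x * u + 12 * x^2 + (-96) *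 x^2 * u + 144 * x^2 * u^2 + (-384) * x^3 * u + 2304 * x^3 * u^2 + 256 * x^4 + (-3072) * x^4 * u + 9216 * x^4 * u^2) * gA + ((-8) * x + (-24) * x * u + (-288) * x^2 * u + 384 * x^3 + (-1024) * x^4 + 6144 * x^4 * u) * gB + (1 + 8 * x + (-48) * x^2 + (-256) * x^3 + 1024 * x^4) * gC)/(1+8 * x)^4) + (3 * u^2-1/4) * (((2 * x + (-12) * x * u + 16 * x^2 + (-96) * x^2 * u) * gA + (1 + 4 * x + (-32) * x^2) * gB)/(1+8 * x)^2) - (-27 * x/(1-4 * x)^3) * ((((2 * x + (-12) * x * u + (-28) * x^2 + 96 * x^2 * u + 432 * x^2 * u^2 + (-40) * x^3 + (-720) * x^3 * u + 6048 * x^3 * u^2 + (-1728) * x^3 * u^3 + 1984 * x^4 + (-14208) * x^4 * u + 20736 * x^4 * u^2 + (-41472) * x^4 * u^3 + (-3584) * x^5 + 21504 * x^5 * u + 55296 * x^5 * u^2 + (-331776) * x^5 * u^3 + 4096 * x^6 + (-73728) * x^6 * u + 442368 * x^6 * u^2 + (-884736) * x^6 * u^3) * gA + ((-6) * x + (-36) * x * u + 228 * x^2 + 432 * x^2 * u^2 + 240 * x^3 + 4032 * x^3 * u + 8640 * x^3 * u^2 + (-11136) * x^4 + (-4608) * x^4 * u + 41472 * x^4 * u^2 + 33792 * x^5 + (-110592) * x^5 * u + (-110592) * x^5 * u^2 + (-24576) * x^6 + 294912 * x^6 * u + (-884736) * x^6 * u^2) * gB + ((-30) * x + (-36) * x *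 u + (-192) * x^2 + (-576) * x^2 * u + 1824 * x^3 + (-576) * x^3 * u + 5376 * x^4 + 23040 * x^4 * u + (-43008) * x^5 + 36864 * x^5 * u + 49152 * x^6 + (-294912) * x^6 * u) * gC + (1 + 12 * x + (-48) * x^2 + (-704) * x^3 + 1536 * x^4 + 12288 * x^5 + (-32768) * x^6) * gD)/(1+8 * x)^6) + (3 * u+1/2) * (((2 * x + (-12) * x * u + 12 * x^2 + (-96) * x^2 * u + 144 * x^2 * u^2 + (-384) * x^3 * u + 2304 * x^3 * u^2 + 256 * x^4 + (-3072) * x^4 * u + 9216 * x^4 * u^2) * gA + ((-8) * x + (-24) * x * u + (-288) * x^2 * u + 384 * x^3 + (-1024) * x^4 + 6144 * x^4 * u) * gB + (1 + 8 * x + (-48) * x^2 + (-256) * x^3 + 1024 * x^4) * gC)/(1+8 * x)^4) + (3 * u^2+u-1/36) * (((2 * x + (-12) * x * u + 16 * x^2 + (-96) * x^2 * u) * gA + (1 + 4 * x + (-32) * x^2) * gB)/(1+8 * x)^2) + ((u-1/6) * (u+1/6) * (u+1/2)) * (gA/(1+8 * x)^0)))  *  (1+8 * x)^3 = ((9/8) * x + (-15/4) * x * u + (-33/2) * x * u^2 + (-9) * x * u^3 + (-18) * x^2 + 132 * x^2 * u + (-120) * x^2 * u^2 + (-144) * x^2 * u^3 + (-24) * x^3 + 144 * x^3 * u + 96 * x^3 * u^2 + (-576) * x^3 * u^3) * gA + ((-1/4) + 3 * u^2 + (-39/4) * x + (-33) * x * u + 45 * x * u^2 + 84 * x^2 +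 (-240) * x^2 * u + 144 * x^2 * u^2 + 16 * x^3 + 192 * x^3 * u + (-192) * x^3 * u^2) * gB + (3 * u + (-33/2) * x + 45 * x * u + (-120) * x^2 + 144 * x^2 * u + 96 * x^3 + (-192) * x^3 * u) * gC + (1 + 15 * x + 48 * x^2 + (-64) * x^3) * gD"
  unfolding at_fg[OF nz1 nz2] by (rule at_div[OF _ final_poly]) (use nz1 nz2 in simp)

lemma at_e: fixes E A1 A2 A3 G S P B C D Z VV :: 'a shows
  "(E * A3 + S * (E * A2) + P * (E * A1) - Z * (E * A3 + B * (E * A2) + C * (E * A1) + D * (E * G))) * VV = E * ((A3 + S * A2 + P * A1 - Z * (A3 + B * A2 + C * A1 + D * G)) * VV)"
  by (simp add: algebra_simps)
lemma LLfinal: "(T (T (T (e * gA))) + (3 * u) * T (T (e * gA)) + (3 * u^2-1/4) * T (e * gA) - (-27 * x/(1-4 * x)^3) * (T (T (T (e * gA))) + (3 * u+1/2) * T (T (e * gA)) + (3 * u^2+u-1/36) * T (e * gA) + ((u-1/6) * (u+1/6) * (u+1/2)) * (e * gA))) * (1+8 * x)^3 = e * (((9/8) * x + (-15/4) * x * u + (-33/2) * x * u^2 + (-9) * x * u^3 + (-18) * x^2 + 132 * x^2 * u + (-120) * x^2 * u^2 + (-144) * x^2 * u^3 + (-24) * x^3 + 144 * x^3 * u + 96 * x^3 * u^2 + (-576) * x^3 * u^3) * gA + ((-1/4) + 3 * u^2 + (-39/4) * x + (-33) * x * u + 45 * x * u^2 + 84 * x^2 + (-240) * x^2 * u + 144 *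 x^2 * u^2 + 16 * x^3 + 192 * x^3 * u + (-192) * x^3 * u^2) * gB + (3 * u + (-33/2) * x + 45 * x * u + (-120) * x^2 + 144 * x^2 * u + 96 * x^3 + (-192) * x^3 * u) * gC + (1 + 15 * x + 48 * x^2 + (-64) * x^3) * gD)"
proof -
  have e0: "e * gA = e * (gA/(1+8 * x)^0)" by simp
  show ?thesis unfolding e0 step1 step2 step3 at_e final ..
qed
end
end

locale params =
  fixes u c :: real
  assumes uc: "3 * u^2 + c^2 = 1"
      and nb1: "\<not> nonpos_int (1 + 3 * u/2 + c/2)"
      and nb2: "\<not> nonpos_int (1 + 3 * u/2 - c/2)"
      and nb3: "\<not> nonpos_int (u - 1/2)"
begin

definition "fr n = hc [u - 1/6, u + 1/6, u + 1/2] [1 + 3 * u/2 + c/2, 1 + 3 * u/2 - c/2] n"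
definition "gr n = hc [3 * u - 1/2, -1/2 - c, -1/2 + c, 3/2 + u] [1 + 3 * u/2 + c/2, 1 + 3 * u/2 - c/2, u - 1/2] n"
definition "hr n = hc [3 * u - 1/2, -1/2 - c, -1/2 + c] [1 + 3 * u/2 + c/2, 1 + 3 * u/2 - c/2] n"

definition "Ar (k::real) = (k+1) * ((k+1)^2 + 3 * u * (k+1) + 3 * u^2 - 1/4)"
definition "Br (k::real) = (k + 3 * u - 1/2) * ((k - 1/2)^2 - 1 + 3 * u^2)"
definition "Fn (k::real) = (k + u - 1/6) * (k + u + 1/6) * (k + u + 1/2)"

lemma c2: "c^2 = 1 - 3 * u^2" using uc by simp

lemma bprod: "real (Suc n)  *  ((1 + 3 * u/2 + c/2 + real n)  *  ((1 + 3 * u/2 - c/2 + real n)  *  1)) = (real n + 1) * ((real n + 1)^2 + 3 * u * (real n + 1) + 3 * u^2 - 1/4)"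
proof -
  have "(1 + 3 * u/2 + c/2 + real n)  *  (1 + 3 * u/2 - c/2 + real n) = (real n + 1)^2 + 3 * u * (real n + 1) + 9 * u^2/4 - c^2/4"
    by (simp add: algebra_simps power2_eq_square)
  also have "\<dots> = (real n + 1)^2 + 3 * u * (real n + 1) + 3 * u^2 - 1/4" using c2 by (simp add: field_simps)
  finally show ?thesis by simp
qed
lemma cprod: "(-1/2 - c + real n)  *  (-1/2 + c + real n) = (real n - 1/2)^2 - 1 + 3 * u^2"
proof -
  have "(-1/2 - c + real n)  *  (-1/2 + c + real n) = (real n - 1/2)^2 - c^2"
    by (simp add: algebra_simps power2_eq_square)
  thus ?thesis using c2 by simp
qed

lemma fr_rec: "fr (Suc n)  *  Ar (real n) = fr n  *  Fn (real n)"
proof -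
  have "fr (Suc n)  *  (real (Suc n)  *  ((1 + 3 * u/2 + c/2 + real n)  *  ((1 + 3 * u/2 - c/2 + real n)  *  1)))
        = fr n  *  ((u - 1/6 + real n)  *  ((u + 1/6 + real n)  *  ((u + 1/2 + real n)  *  1)))"
    unfolding fr_def using hc_Suc[of "[1 + 3 * u/2 + c/2, 1 + 3 * u/2 - c/2]" "[u - 1/6, u + 1/6, u + 1/2]" n] nb1 nb2
    by simp
  moreover have "real (Suc n)  *  ((1 + 3 * u/2 + c/2 + real n)  *  ((1 + 3 * u/2 - c/2 + real n)  *  1)) = Ar (real n)"
    unfolding Ar_def by (simp only: bprod)
  moreover have "(u - 1/6 + real n)  *  ((u + 1/6 + real n)  *  ((u + 1/2 + real n)  *  1)) = Fn (real n)"
    unfolding Fn_def by algebra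
  ultimately show ?thesis by simp
qed

lemma hr_rec: "hr (Suc n)  *  Ar (real n) = hr n  *  Br (real n)"
proof -
  have "hr (Suc n)  *  (real (Suc n)  *  ((1 + 3 * u/2 + c/2 + real n)  *  ((1 + 3 * u/2 - c/2 + real n)  *  1)))
        = hr n  *  ((3 * u - 1/2 + real n)  *  ((-1/2 - c + real n)  *  ((-1/2 + c + real n)  *  1)))"
    unfolding hr_def using hc_Suc[of "[1 + 3 * u/2 + c/2, 1 + 3 * u/2 - c/2]" "[3 * u - 1/2, -1/2 - c, -1/2 + c]" n] nb1 nb2
    by simp
  moreover have "real (Suc n)  *  ((1 + 3 * u/2 + c/2 + real n)  *  ((1 + 3 * u/2 - c/2 + real n)  *  1)) = Ar (real n)"
    unfolding Ar_def by (simp only: bprod)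
  moreover have "(3 * u - 1/2 + real n)  *  ((-1/2 - c + real n)  *  ((-1/2 + c + real n)  *  1)) = Br (real n)"
    unfolding Br_def by (subst cprod[symmetric]) (simp add: algebra_simps)
  ultimately show ?thesis by simp
qed

lemma poch_ratio: "pochhammer (3/2 + u) n  *  ((u - 1/2) * (u + 1/2)) = pochhammer (u - 1/2) n  *  ((u - 1/2 + real n) * (u + 1/2 + real n))"
proof (induction n)
  case 0 thus ?case by simp
next
  case (Suc n)
  have "pochhammer (3/2 + u) (Suc n)  *  ((u - 1/2) * (u + 1/2)) = (pochhammer (3/2 + u) n  *  ((u - 1/2) * (u + 1/2)))  *  (3/2 + u + real n)"
    by (simp add: pochhammer_Suc, (algebra)?)
  also have "\<dots> = pochhammer (u - 1/2) n  *  ((u - 1/2 + real n) * (u + 1/2 + real n))  *  (3/2 + u + real n)"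
    using Suc by simp
  also have "\<dots> = pochhammer (u - 1/2) (Suc n)  *  ((u - 1/2 + real (Suc n)) * (u + 1/2 + real (Suc n)))"
    by (simp add: pochhammer_Suc, (algebra)?)
  finally show ?case .
qed

lemma u_half: "(u - 1/2) * (u + 1/2) \<noteq> 0"
proof
  assume "(u - 1/2) * (u + 1/2) = 0"
  hence "u - 1/2 = 0 \<or> u - 1/2 = - 1" by auto
  hence "u - 1/2 = - real (0::nat) \<or> u - 1/2 = - real (1::nat)" by simp
  thus False using nb3 unfolding nonpos_int_def by blast
qed

lemma gr_hr: "gr n  *  ((u - 1/2) * (u + 1/2)) = hr n  *  ((u - 1/2 + real n) * (u + 1/2 + real n))"
proof -
  have p: "pochhammer (u - 1/2) n \<noteq> 0" using pochhammer_nz[OF nb3] .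
  have g: "gr n = hr n  *  pochhammer (3/2 + u) n / pochhammer (u - 1/2) n"
    unfolding gr_def hr_def hc_def using p by (simp add: field_simps)
  have "gr n  *  ((u - 1/2) * (u + 1/2)) = hr n  *  (pochhammer (3/2 + u) n  *  ((u - 1/2) * (u + 1/2))) / pochhammer (u - 1/2) n"
    unfolding g by simp
  also have "\<dots> = hr n  *  (pochhammer (u - 1/2) n  *  ((u - 1/2 + real n) * (u + 1/2 + real n))) / pochhammer (u - 1/2) n"
    unfolding poch_ratio ..
  also have "\<dots> = hr n  *  ((u - 1/2 + real n) * (u + 1/2 + real n))" using p by simp
  finally show ?thesis .
qed


definition "P0 (t::real) = ((-1/4) * t + 1 * t^3 + 3 * u * t^2 + 3 * u^2 * t)"
definition "P1 (t::real) = ((9/8) + (-39/4) * t + (-33/2) * t^2 + 15 * t^3 + (-15/4) * u + (-33) * u * t + 45 * u * t^2 + (-33/2) * u^2 + 45 * u^2 * t + (-9) * u^3)"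
definition "P2 (t::real) = ((-18) + 84 * t + (-120) * t^2 + 48 * t^3 + 132 * u + (-240) * u * t + 144 * u * t^2 + (-120) * u^2 + 144 * u^2 * t + (-144) * u^3)"
definition "P3 (t::real) = ((-24) + 16 * t + 96 * t^2 + (-64) * t^3 + 144 * u + 192 * u * t + (-192) * u * t^2 + 96 * u^2 + (-192) * u^2 * t + (-576) * u^3)"
definition "q1 (n::real) = ((-1/4) + 1 * n^2 + 2 * u * n + 1 * u^2)"
definition "q2 (n::real) = (20 + (-48) * n + 16 * n^2 + (-48) * u + 32 * u * n + 16 * u^2)"
definition "q3 (n::real) = (560 + (-384) * n + 64 * n^2 + (-384) * u + 128 * u * n + 64 * u^2)"
definition "kap (t::real) = (u - 1/2 + t) * (u + 1/2 + t)"

lemma gr_kap: "gr n  *  ((u - 1/2) * (u + 1/2)) = hr n  *  kap (real n)"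
  using gr_hr unfolding kap_def .

lemma hr_rec': "hr (Suc n)  *  Ar (real n) - hr n  *  Br (real n) = 0" using hr_rec by simp

lemma S_id: fixes m H0 H1 H2 H3 :: real shows
  "P0 (m+3)  *  (H3  *  kap (m+3)) + P1 (m+2)  *  (H2  *  kap (m+2)) + P2 (m+1)  *  (H1  *  kap (m+1)) + P3 m  *  (H0  *  kap m)
   = q1 (m+3)  *  (H3  *  Ar (m+2) - H2  *  Br (m+2)) + q2 (m+3)  *  (H2  *  Ar (m+1) - H1  *  Br (m+1)) + q3 (m+3)  *  (H1  *  Ar m - H0  *  Br m)"
  unfolding P0_def P1_def P2_def P3_def q1_def q2_def q3_def kap_def Ar_def Br_def by algebra

lemma S_id1: fixes H0 H1 :: real shows
  "P0 1  *  (H1  *  kap 1) + P1 0  *  (H0  *  kap 0) = q1 1  *  (H1  *  Ar 0 - H0  *  Br 0)"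
  unfolding P0_def P1_def P2_def P3_def q1_def q2_def q3_def kap_def Ar_def Br_def by (simp, (algebra)?)

lemma S_id2: fixes H0 H1 H2 :: real shows
  "P0 2  *  (H2  *  kap 2) + P1 1  *  (H1  *  kap 1) + P2 0  *  (H0  *  kap 0) = q1 2  *  (H2  *  Ar 1 - H1  *  Br 1) + q2 2  *  (H1  *  Ar 0 - H0  *  Br 0)"
  unfolding P0_def P1_def P2_def P3_def q1_def q2_def q3_def kap_def Ar_def Br_def by (simp, (algebra)?)

lemma K_nz: "(u - 1/2) * (u + 1/2) \<noteq> 0" by (rule u_half)

lemma S3: "P0 (real m + 3)  *  gr (m+3) + P1 (real m + 2)  *  gr (m+2) + P2 (real m + 1)  *  gr (m+1) + P3 (real m)  *  gr m = 0"
proof -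
  define K where "K = (u - 1/2) * (u + 1/2)"
  have gk: "\<And>n. gr n  *  K = hr n  *  kap (real n)" unfolding K_def by (rule gr_kap)
  have r0: "hr (m+1)  *  Ar (real m) - hr m  *  Br (real m) = 0" using hr_rec'[of m] by simp
  have r1: "hr (m+2)  *  Ar (real m + 1) - hr (m+1)  *  Br (real m + 1) = 0" using hr_rec'[of "m+1"] by (simp add: add.commute numeral_2_eq_2)
  have r2: "hr (m+3)  *  Ar (real m + 2) - hr (m+2)  *  Br (real m + 2) = 0" using hr_rec'[of "m+2"] by (simp add: add.commute numeral_3_eq_3)
  have "(P0 (real m + 3)  *  gr (m+3) + P1 (real m + 2)  *  gr (m+2) + P2 (real m + 1)  *  gr (m+1) + P3 (real m)  *  gr m)  *  K
     = P0 (real m + 3)  *  (gr (m+3)  *  K) + P1 (real m + 2)  *  (gr (m+2)  *  K) + P2 (real m + 1)  *  (gr (m+1)  *  K) + P3 (real m)  *  (gr m  *  K)"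
    by (simp add: algebra_simps)
  also have "\<dots> = P0 (real m + 3)  *  (hr (m+3)  *  kap (real m + 3)) + P1 (real m + 2)  *  (hr (m+2)  *  kap (real m + 2)) + P2 (real m + 1)  *  (hr (m+1)  *  kap (real m + 1)) + P3 (real m)  *  (hr m  *  kap (real m))"
    unfolding gk by (simp add: add.commute)
  also have "\<dots> = 0" unfolding S_id r0 r1 r2 by simp
  finally show ?thesis using K_nz unfolding K_def by simp
qed

lemma S0: "P0 0  *  gr 0 = 0" by (simp add: P0_def)

lemma S1: "P0 1  *  gr 1 + P1 0  *  gr 0 = 0"
proof -
  define K where "K = (u - 1/2) * (u + 1/2)"
  have gk: "\<And>n. gr n  *  K = hr n  *  kap (real n)" unfolding K_def by (rule gr_kap)
  have r0: "hr 1  *  Ar 0 - hr 0  *  Br 0 = 0" using hr_rec'[of 0] by simp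
  have "(P0 1  *  gr 1 + P1 0  *  gr 0)  *  K = P0 1  *  (gr 1  *  K) + P1 0  *  (gr 0  *  K)" by (simp add: algebra_simps)
  also have "\<dots> = P0 1  *  (hr 1  *  kap 1) + P1 0  *  (hr 0  *  kap 0)" unfolding gk by simp
  also have "\<dots> = 0" unfolding S_id1 r0 by simp
  finally show ?thesis using K_nz unfolding K_def by simp
qed

lemma S2: "P0 2  *  gr 2 + P1 1  *  gr 1 + P2 0  *  gr 0 = 0"
proof -
  define K where "K = (u - 1/2) * (u + 1/2)"
  have gk: "\<And>n. gr n  *  K = hr n  *  kap (real n)" unfolding K_def by (rule gr_kap)
  have r0: "hr 1  *  Ar 0 - hr 0  *  Br 0 = 0" using hr_rec'[of 0] by simp
  have r1: "hr 2  *  Ar 1 - hr 1  *  Br 1 = 0" using hr_rec'[of 1] by (simp add: numeral_2_eq_2)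
  have "(P0 2  *  gr 2 + P1 1  *  gr 1 + P2 0  *  gr 0)  *  K = P0 2  *  (gr 2  *  K) + P1 1  *  (gr 1  *  K) + P2 0  *  (gr 0  *  K)" by (simp add: algebra_simps)
  also have "\<dots> = P0 2  *  (hr 2  *  kap 2) + P1 1  *  (hr 1  *  kap 1) + P2 0  *  (hr 0  *  kap 0)" unfolding gk by simp
  also have "\<dots> = 0" unfolding S_id2 r0 r1 by simp
  finally show ?thesis using K_nz unfolding K_def by simp
qed

end

definition Th :: "complex fps \<Rightarrow> complex fps" where "Th A = fps_X  *  fps_deriv A"
lemma Th_nth [simp]: "Th A $ n = of_nat n  *  A $ n" by (simp add: Th_def fps_mult_fps_X_deriv_shift)

definition Rho :: "complex fps" where "Rho = (1 - 4 * fps_X)  *  inverse (1 + 8 * fps_X)"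
definition Zf :: "complex fps" where "Zf = -27  *  fps_X  *  inverse ((1 - 4 * fps_X)^3)"
definition Tf :: "complex fps \<Rightarrow> complex fps" where "Tf A = Rho  *  Th A"

definition thl :: "complex fls \<Rightarrow> complex fls" where "thl f = fls_X  *  fls_deriv f"
definition Tl :: "complex fls \<Rightarrow> complex fls" where "Tl h = (1 - 4 * fls_X)/(1 + 8 * fls_X)  *  thl h"

interpretation fd: dering thl
  by unfold_locales (simp_all add: thl_def algebra_simps)

lemma thl_X: "thl fls_X = fls_X" by (simp add: thl_def)
lemma thl_const: "thl (fls_const a) = 0" by (simp add: thl_def)

lemma f18: "fps_to_fls (1 + 8 * fps_X :: complex fps) = 1 + 8 * fls_X" by (simp add: fls_times_fps_to_fls)
lemma f14: "fps_to_fls (1 - 4 * fps_X :: complex fps) = 1 - 4 * fls_X" by (simp add: fls_times_fps_to_fls)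
lemma p18: "(1 + 8 * fps_X :: complex fps) $ 0 = 1" by simp
lemma p14: "(1 - 4 * fps_X :: complex fps) $ 0 = 1" by simp
lemma p14_3: "((1 - 4 * fps_X :: complex fps)^3) $ 0 = 1" by (simp add: fps_nth_power_0)

lemma nz18: "(1 + 8 * fls_X :: complex fls) \<noteq> 0"
proof -
  have "(1 + 8 * fps_X :: complex fps) \<noteq> 0" using p18 by (metis fps_zero_nth zero_neq_one)
  thus ?thesis using f18 fps_to_fls_eq_0_iff by metis
qed
lemma nz14: "(1 - 4 * fls_X :: complex fls) \<noteq> 0"
proof -
  have "(1 - 4 * fps_X :: complex fps) \<noteq> 0" using p14 by (metis fps_zero_nth zero_neq_one)
  thus ?thesis using f14 fps_to_fls_eq_0_iff by metis
qed

lemma Rho_fls: "fps_to_fls Rho = (1 - 4 * fls_X)/(1 + 8 * fls_X)"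
proof -
  have "fps_to_fls (inverse (1 + 8 * fps_X :: complex fps)) = inverse (1 + 8 * fls_X)"
    using fls_inverse_fps_to_fls[of "1 + 8 * fps_X :: complex fps"] p18 f18 by simp
  thus ?thesis unfolding Rho_def fls_times_fps_to_fls f14 by (simp add: divide_inverse)
qed

lemma Zf_fls: "fps_to_fls Zf = -27 * fls_X/(1 - 4 * fls_X)^3"
proof -
  have "fps_to_fls (inverse ((1 - 4 * fps_X)^3 :: complex fps)) = inverse ((1 - 4 * fls_X)^3)"
    using fls_inverse_fps_to_fls[of "(1 - 4 * fps_X)^3 :: complex fps"] p14_3 f14 by (simp add: fps_to_fls_power)
  thus ?thesis unfolding Zf_def fls_times_fps_to_fls by (simp add: divide_inverse)
qed

lemma Th_fls: "fps_to_fls (Th A) = thl (fps_to_fls A)"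
  by (simp add: Th_def thl_def fls_times_fps_to_fls fls_deriv_fps_to_fls)

lemma Tf_fls: "fps_to_fls (Tf A) = Tl (fps_to_fls A)"
  by (simp add: Tf_def Tl_def fls_times_fps_to_fls Rho_fls Th_fls)

lemma Zkey_fps: "Rho  *  Th Zf = Zf"
proof -
  have "fps_to_fls (Rho  *  Th Zf) = fps_to_fls Zf"
    unfolding fls_times_fps_to_fls Rho_fls Th_fls Zf_fls
    by (rule fd.Zkey[OF thl_X nz18 nz14])
  thus ?thesis by simp
qed

lemma Zf0: "Zf $ 0 = 0" by (simp add: Zf_def fps_mult_nth)

lemma X_comp_Zf: "fps_X oo Zf = Zf"
  using Zf0 by (simp add: fps_X_fps_compose fps_eq_iff)

lemma chain: "(Th A) oo Zf = Tf (A oo Zf)"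
proof -
  have "(Th A) oo Zf = Zf  *  (fps_deriv A oo Zf)"
    unfolding Th_def fps_compose_mult_distrib[OF Zf0] X_comp_Zf ..
  also have "\<dots> = (Rho  *  Th Zf)  *  (fps_deriv A oo Zf)" unfolding Zkey_fps ..
  also have "\<dots> = Tf (A oo Zf)"
    unfolding Tf_def Th_def fps_compose_deriv[OF Zf0] by (simp add: algebra_simps)
  finally show ?thesis .
qed

lemma const_comp: "(fps_const a  *  A) oo Zf = fps_const a  *  (A oo Zf)"
  by (simp add: fps_compose_mult_distrib[OF Zf0])

lemma X_comp: "(fps_X  *  A) oo Zf = Zf  *  (A oo Zf)"
  by (simp add: fps_compose_mult_distrib[OF Zf0] X_comp_Zf)

definition LLf :: "complex \<Rightarrow> complex fps \<Rightarrow> complex fps" where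
  "LLf U A = Tf (Tf (Tf A)) + fps_const (3 * U)  *  Tf (Tf A) + fps_const (3 * U^2 - 1/4)  *  Tf A
     - Zf  *  (Tf (Tf (Tf A)) + fps_const (3 * U + 1/2)  *  Tf (Tf A) + fps_const (3 * U^2 + U - 1/36)  *  Tf A
             + fps_const ((U - 1/6) * (U + 1/6) * (U + 1/2))  *  A)"

lemma LLf_comp:
  assumes ode: "Th (Th (Th F)) + fps_const (3 * U)  *  Th (Th F) + fps_const (3 * U^2 - 1/4)  *  Th F
     = fps_X  *  (Th (Th (Th F)) + fps_const (3 * U + 1/2)  *  Th (Th F) + fps_const (3 * U^2 + U - 1/36)  *  Th F
             + fps_const ((U - 1/6) * (U + 1/6) * (U + 1/2))  *  F)"
  shows "LLf U (F oo Zf) = 0"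
proof -
  have "(Th (Th (Th F)) + fps_const (3 * U)  *  Th (Th F) + fps_const (3 * U^2 - 1/4)  *  Th F) oo Zf
     = (fps_X  *  (Th (Th (Th F)) + fps_const (3 * U + 1/2)  *  Th (Th F) + fps_const (3 * U^2 + U - 1/36)  *  Th F
             + fps_const ((U - 1/6) * (U + 1/6) * (U + 1/2))  *  F)) oo Zf"
    by (simp only: ode)
  thus ?thesis
    unfolding LLf_def X_comp fps_compose_add_distrib const_comp chain by simp
qed

lemma Tf_diff: "Tf (A - B) = Tf A - Tf B" by (simp add: Tf_def Th_def algebra_simps)

lemma LLf_diff: "LLf U (A - B) = LLf U A - LLf U B"
  unfolding LLf_def Tf_diff by (simp add: algebra_simps)

definition low :: "nat \<Rightarrow> complex fps \<Rightarrow> bool" where "low n A \<longleftrightarrow> (\<forall>k<n. A $ k = 0)"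

lemma Rho0: "Rho $ 0 = 1" by (simp add: Rho_def)

lemma mult_low:
  fixes H S :: "complex fps"
  assumes "low n S"
  shows "low n (H  *  S)" "(H  *  S) $ n = H $ 0  *  S $ n"
proof -
  show "low n (H  *  S)" unfolding low_def
  proof (intro allI impI)
    fix k assume k: "k < n"
    have "(H  *  S) $ k = (\<Sum>i=0..k. H$i  *  S$(k - i))" by (rule fps_mult_nth)
    also have "\<dots> = 0" using assms k unfolding low_def by (intro sum.neutral) auto
    finally show "(H  *  S) $ k = 0" .
  qed
  have "(H  *  S) $ n = (\<Sum>i=0..n. H$i  *  S$(n - i))" by (rule fps_mult_nth)
  also have "\<dots> = H$0  *  S$(n - 0) + (\<Sum>i=Suc 0..n. H$i  *  S$(n - i))"
    by (simp add: sum.atLeast_Suc_atMost)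
  also have "(\<Sum>i=Suc 0..n. H$i  *  S$(n - i)) = 0"
    using assms unfolding low_def by (intro sum.neutral) auto
  finally show "(H  *  S) $ n = H $ 0  *  S $ n" by simp
qed

lemma Th_low: "low n A \<Longrightarrow> low n (Th A) \<and> Th A $ n = of_nat n  *  A $ n"
  by (simp add: low_def)

lemma Tf_low: assumes "low n A" shows "low n (Tf A)" "Tf A $ n = of_nat n  *  A $ n"
proof -
  have t: "low n (Th A)" using Th_low[OF assms] by simp
  show "low n (Tf A)" unfolding Tf_def using mult_low(1)[OF t] .
  show "Tf A $ n = of_nat n  *  A $ n" unfolding Tf_def using mult_low(2)[OF t] Rho0 by simp
qed

lemma low_add: "low n A \<Longrightarrow> low n B \<Longrightarrow> low n (A + B)" by (simp add: low_def)
lemma low_const: "low n A \<Longrightarrow> low n (fps_const a  *  A)" by (simp add: low_def)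

lemma LLf_low:
  fixes A :: "complex fps"
  assumes "low n A"
  shows "LLf U A $ n = ((of_nat n)^3 + 3 * U * (of_nat n)^2 + (3 * U^2 - 1/4) * (of_nat n))  *  A $ n"
proof -
  have l1: "low n (Tf A)" and e1: "Tf A $ n = of_nat n  *  A $ n" using Tf_low[OF assms] by auto
  have l2: "low n (Tf (Tf A))" and e2: "Tf (Tf A) $ n = of_nat n  *  Tf A $ n" using Tf_low[OF l1] by auto
  have l3: "low n (Tf (Tf (Tf A)))" and e3: "Tf (Tf (Tf A)) $ n = of_nat n  *  Tf (Tf A) $ n" using Tf_low[OF l2] by auto
  have lz: "low n (Tf (Tf (Tf A)) + fps_const (3 * U + 1/2)  *  Tf (Tf A) + fps_const (3 * U^2 + U - 1/36)  *  Tf A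
             + fps_const ((U - 1/6) * (U + 1/6) * (U + 1/2))  *  A)"
    by (intro low_add low_const l1 l2 l3 assms)
  have z: "(Zf  *  (Tf (Tf (Tf A)) + fps_const (3 * U + 1/2)  *  Tf (Tf A) + fps_const (3 * U^2 + U - 1/36)  *  Tf A
             + fps_const ((U - 1/6) * (U + 1/6) * (U + 1/2))  *  A)) $ n = 0"
    using mult_low(2)[OF lz] Zf0 by simp
  show ?thesis unfolding LLf_def fps_sub_nth fps_add_nth z fps_mult_left_const_nth e3 e2 e1
    by (simp add: algebra_simps power2_eq_square power3_eq_cube)
qed

lemma uniq:
  assumes nz: "\<And>n. n \<ge> 1 \<Longrightarrow> ((of_nat n)^3 + 3 * U * (of_nat n)^2 + (3 * U^2 - 1/4) * (of_nat n) :: complex) \<noteq> 0"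
      and L: "LLf U R = 0" and R0: "R $ 0 = 0"
  shows "R = 0"
proof -
  have "R $ n = 0" for n
  proof (induction n rule: less_induct)
    case (less n)
    show ?case
    proof (cases "n = 0")
      case True thus ?thesis using R0 by simp
    next
      case False
      have "low n R" using less unfolding low_def by blast
      from LLf_low[OF this, of U] L have "((of_nat n)^3 + 3 * U * (of_nat n)^2 + (3 * U^2 - 1/4) * (of_nat n))  *  R $ n = 0" by simp
      thus ?thesis using nz[of n] False by simp
    qed
  qed
  thus ?thesis by (simp add: fps_eq_iff)
qed

lemma fls_const_add': "fls_const (a + b) = fls_const a + fls_const b" by (simp add: fls_plus_const)
lemma fls_const_diff': "fls_const (a - b) = fls_const a - fls_const b" by (simp add: fls_minus_const)
lemma fls_const_mult': "fls_const (a  *  b) = fls_const a  *  (fls_const b :: 'a::comm_ring_1 fls)" by simp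
lemma fls_const_div': "fls_const (a / b) = fls_const a / (fls_const b :: 'a::field fls)" by (simp add: fls_const_divide_const)
lemma fls_const_pow': "fls_const (a ^ n) = (fls_const a :: 'a::comm_ring_1 fls) ^ n"
  by (induction n) (simp_all add: fls_const_mult')
lemmas flsc = fls_const_add' fls_const_diff' fls_const_mult' fls_const_div' fls_const_pow' fls_const_numeral fls_const_1 fls_const_0 fls_const_uminus

context params
begin

definition "Uc = complex_of_real u"
definition "Ul = (fls_const Uc :: complex fls)"
definition "er n = ((3 * u - 1/2) gchoose n)  *  (-4)^n"
definition "Fc = Abs_fps (\<lambda>n. complex_of_real (fr n))"
definition "Gc = Abs_fps (\<lambda>n. complex_of_real (gr n))"
definition "Ec = Abs_fps (\<lambda>n. complex_of_real (er n))"
definition "El = fps_to_fls Ec"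
definition "Gl = fps_to_fls Gc"

lemma Th3_nth: "(Th (Th (Th F)) + fps_const a  *  Th (Th F) + fps_const b  *  Th F) $ n = (of_nat n^3 + a  *  of_nat n^2 + b  *  of_nat n)  *  F $ n"
  by (simp add: algebra_simps power2_eq_square power3_eq_cube)

lemma F_ode: "Th (Th (Th Fc)) + fps_const (3 * Uc)  *  Th (Th Fc) + fps_const (3 * Uc^2 - 1/4)  *  Th Fc
     = fps_X  *  (Th (Th (Th Fc)) + fps_const (3 * Uc + 1/2)  *  Th (Th Fc) + fps_const (3 * Uc^2 + Uc - 1/36)  *  Th Fc
             + fps_const ((Uc - 1/6) * (Uc + 1/6) * (Uc + 1/2))  *  Fc)"
proof (rule fps_ext)
  fix n
  show "(Th (Th (Th Fc)) + fps_const (3 * Uc)  *  Th (Th Fc) + fps_const (3 * Uc^2 - 1/4)  *  Th Fc) $ n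
     = (fps_X  *  (Th (Th (Th Fc)) + fps_const (3 * Uc + 1/2)  *  Th (Th Fc) + fps_const (3 * Uc^2 + Uc - 1/36)  *  Th Fc
             + fps_const ((Uc - 1/6) * (Uc + 1/6) * (Uc + 1/2))  *  Fc)) $ n"
  proof (cases n)
    case 0 thus ?thesis by (simp add: Th3_nth)
  next
    case (Suc m)
    have r: "complex_of_real (fr (Suc m)  *  Ar (real m)) = complex_of_real (fr m  *  Fn (real m))" using fr_rec by simp
    have a: "complex_of_real (Ar (real m)) = of_nat (Suc m)^3 + 3 * Uc  *  of_nat (Suc m)^2 + (3 * Uc^2 - 1/4)  *  of_nat (Suc m)"
      unfolding Ar_def Uc_def by (simp, (algebra)?)
    have f: "complex_of_real (Fn (real m)) = of_nat m^3 + (3 * Uc + 1/2)  *  of_nat m^2 + (3 * Uc^2 + Uc - 1/36)  *  of_nat m + (Uc - 1/6) * (Uc + 1/6) * (Uc + 1/2)"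
      unfolding Fn_def Uc_def by (simp, (algebra)?)
    have "(of_nat (Suc m)^3 + 3 * Uc  *  of_nat (Suc m)^2 + (3 * Uc^2 - 1/4)  *  of_nat (Suc m))  *  complex_of_real (fr (Suc m))
        = (of_nat m^3 + (3 * Uc + 1/2)  *  of_nat m^2 + (3 * Uc^2 + Uc - 1/36)  *  of_nat m + (Uc - 1/6) * (Uc + 1/6) * (Uc + 1/2))  *  complex_of_real (fr m)"
      using r unfolding of_real_mult a f by (simp add: mult.commute)
    thus ?thesis using Suc unfolding Th3_nth fps_X_mult_nth
      by (simp add: Fc_def algebra_simps power2_eq_square power3_eq_cube)
  qed
qed

lemma LLf_F: "LLf Uc (Fc oo Zf) = 0" by (rule LLf_comp[OF F_ode])

lemma er_rec: "er (Suc n)  *  real (Suc n) = er n  *  (-4)  *  ((3 * u - 1/2) - real n)"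
proof -
  have "(3 * u - 1/2)  *  ((3 * u - 1/2) gchoose n) = real n  *  ((3 * u - 1/2) gchoose n) + real (Suc n)  *  ((3 * u - 1/2) gchoose (Suc n))"
    by (rule gbinomial_mult_1)
  hence h2: "real (Suc n)  *  ((3 * u - 1/2) gchoose (Suc n)) = ((3 * u - 1/2) - real n)  *  ((3 * u - 1/2) gchoose n)"
    by (simp add: algebra_simps)
  have "er (Suc n)  *  real (Suc n) = (-4)^n  *  (-4)  *  (real (Suc n)  *  ((3 * u - 1/2) gchoose (Suc n)))"
    unfolding er_def by (simp only: power_Suc mult_ac)
  also have "\<dots> = (-4)^n  *  (-4)  *  (((3 * u - 1/2) - real n)  *  ((3 * u - 1/2) gchoose n))" unfolding h2 ..
  also have "\<dots> = er n  *  (-4)  *  ((3 * u - 1/2) - real n)" unfolding er_def by (simp only: mult_ac)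
  finally show ?thesis .
qed

lemma er0: "er 0 = 1" by (simp add: er_def)

lemma E_ode: "(1 - 4 * fps_X)  *  fps_deriv Ec = fps_const (-4 * (3 * Uc - 1/2))  *  Ec"
proof (rule fps_ext)
  fix n
  have e: "(1 - 4 * fps_X)  *  fps_deriv Ec = fps_deriv Ec - 4  *  (fps_X  *  fps_deriv Ec)" by (simp add: algebra_simps)
  have r: "\<And>k. complex_of_real (er (Suc k))  *  of_nat (Suc k) = complex_of_real (er k)  *  (-4)  *  ((3 * Uc - 1/2) - of_nat k)"
  proof -
    fix k
    have "complex_of_real (er (Suc k)  *  real (Suc k)) = complex_of_real (er k  *  (-4)  *  ((3 * u - 1/2) - real k))"
      using er_rec by simp
    thus "complex_of_real (er (Suc k))  *  of_nat (Suc k) = complex_of_real (er k)  *  (-4)  *  ((3 * Uc - 1/2) - of_nat k)"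
      unfolding Uc_def by simp
  qed
  show "((1 - 4 * fps_X)  *  fps_deriv Ec) $ n = (fps_const (-4 * (3 * Uc - 1/2))  *  Ec) $ n"
  proof (cases n)
    case 0
    thus ?thesis unfolding e using r[of 0] by (simp add: Ec_def fps_deriv_nth algebra_simps)
  next
    case (Suc m)
    have "of_nat (Suc (Suc m))  *  complex_of_real (er (Suc (Suc m))) - 4  *  (of_nat (Suc m)  *  complex_of_real (er (Suc m)))
          = -4 * (3 * Uc - 1/2)  *  complex_of_real (er (Suc m))"
      using r[of "Suc m"] by (simp add: algebra_simps)
    thus ?thesis unfolding e using Suc by (simp add: Ec_def fps_deriv_nth algebra_simps)
  qed
qed

lemma th_El: "thl El = -4 * (3 * Ul - 1/2) * fls_X * El/(1-4 * fls_X)"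
proof -
  have "fps_to_fls ((1 - 4 * fps_X)  *  fps_deriv Ec) = fps_to_fls (fps_const (-4 * (3 * Uc - 1/2))  *  Ec)"
    using E_ode by simp
  hence "(1 - 4 * fls_X)  *  fls_deriv El = -4 * (3 * Ul - 1/2)  *  El"
    unfolding fls_times_fps_to_fls f14 fls_deriv_fps_to_fls[symmetric] El_def[symmetric] fps_const_to_fls Ul_def
    by (simp add: flsc)
  hence "fls_deriv El = -4 * (3 * Ul - 1/2)  *  El / (1 - 4 * fls_X)" using nz14 by (simp add: field_simps)
  thus ?thesis unfolding thl_def by simp
qed

definition "MG = fps_const ((9/8) + (-15/4) * Uc + (-33/2) * Uc^2 + (-9) * Uc^3)  *  (fps_X^1  *  Gc) + fps_const ((-18) + 132 * Uc + (-120) * Uc^2 + (-144) * Uc^3)  *  (fps_X^2  *  Gc) + fps_const ((-24) + 144 * Uc + 96 * Uc^2 + (-576) * Uc^3)  *  (fps_X^3  *  Gc) + fps_const ((-1/4) + 3 * Uc^2)  *  (fps_X^0  *  Th Gc) + fps_const ((-39/4) + (-33) * Uc + 45 * Uc^2)  *  (fps_X^1  *  Th Gc) + fps_const (84 + (-240) * Uc + 144 * Uc^2)  *  (fps_X^2  *  Th Gc) + fps_const (16 + 192 * Uc + (-192) * Uc^2)  *  (fps_X^3  *  Th Gc) + fps_const (3 * Uc)  *  (fps_X^0  *  Th (Th Gc)) + fps_const ((-33/2) + 45 * Uc)  *  (fps_X^1  *  Th (Th Gc)) + fps_const ((-120) + 144 * Uc)  *  (fps_X^2  *  Th (Th Gc))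 + fps_const (96 + (-192) * Uc)  *  (fps_X^3  *  Th (Th Gc)) + fps_const (1)  *  (fps_X^0  *  Th (Th (Th Gc))) + fps_const (15)  *  (fps_X^1  *  Th (Th (Th Gc))) + fps_const (48)  *  (fps_X^2  *  Th (Th (Th Gc))) + fps_const ((-64))  *  (fps_X^3  *  Th (Th (Th Gc)))"

lemma MG_fls: "fps_to_fls MG = ((9/8) * fls_X + (-15/4) * fls_X * Ul + (-33/2) * fls_X * Ul^2 + (-9) * fls_X * Ul^3 + (-18) * fls_X^2 + 132 * fls_X^2 * Ul + (-120) * fls_X^2 * Ul^2 + (-144) * fls_X^2 * Ul^3 + (-24) * fls_X^3 + 144 * fls_X^3 * Ul + 96 * fls_X^3 * Ul^2 + (-576) * fls_X^3 * Ul^3) * (Gl) + ((-1/4) + 3 * Ul^2 + (-39/4) * fls_X + (-33) * fls_X * Ul + 45 * fls_X * Ul^2 + 84 * fls_X^2 + (-240) * fls_X^2 * Ul + 144 * fls_X^2 * Ul^2 + 16 * fls_X^3 + 192 * fls_X^3 * Ul + (-192) * fls_X^3 * Ul^2) * (thl Gl) + (3 * Ul + (-33/2) * fls_X + 45 * fls_X * Ul + (-120) * fls_X^2 + 144 * fls_X^2 * Ul + 96 * fls_X^3 + (-192) * fls_X^3 * Ul) * (thl (thl Gl)) + (1 + 15 * fls_X + 48 * fls_X^2 + (-64) * fls_X^3) * (thl (thl (thl Gl)))"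
  unfolding MG_def
  by (simp only: fps_to_fls_plus fls_times_fps_to_fls fps_const_to_fls fps_to_fls_power fps_X_to_fls Th_fls Gl_def[symmetric] flsc Ul_def[symmetric] power_0 power_one_right mult_1)
     (simp, (algebra)?)


lemma MG0: "MG $ 0 = 0" unfolding MG_def by (simp add: Gc_def fps_X_power_mult_nth)
lemma MG1: "MG $ 1 = complex_of_real (P0 1  *  gr 1 + P1 0  *  gr 0)"
  unfolding MG_def by (simp add: Gc_def P0_def P1_def Uc_def fps_X_power_mult_nth, (algebra)?)
lemma MG2: "MG $ 2 = complex_of_real (P0 2  *  gr 2 + P1 1  *  gr 1 + P2 0  *  gr 0)"
  unfolding MG_def by (simp add: Gc_def P0_def P1_def P2_def Uc_def fps_X_power_mult_nth, (algebra)?)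
lemma MG3: "MG $ (m+3) = complex_of_real (P0 (real m + 3)  *  gr (m+3) + P1 (real m + 2)  *  gr (m+2) + P2 (real m + 1)  *  gr (m+1) + P3 (real m)  *  gr m)"
  unfolding MG_def by (simp add: Gc_def P0_def P1_def P2_def P3_def Uc_def fps_X_power_mult_nth, (algebra)?)

lemma MG_zero: "MG = 0"
proof (rule fps_ext)
  fix n
  show "MG $ n = 0 $ n"
  proof (cases "n < 3")
    case True
    hence "n = 0 \<or> n = 1 \<or> n = 2" by auto
    moreover have "MG $ 1 = 0" unfolding MG1 S1 by simp
    moreover have "MG $ 2 = 0" unfolding MG2 S2 by simp
    ultimately show ?thesis using MG0 by auto
  next
    case False
    then obtain m where "n = m + 3" by (metis add.commute le_Suc_ex not_less)
    moreover have "MG $ (m+3) = 0" unfolding MG3 S3 by simp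
    ultimately show ?thesis by simp
  qed
qed


lemma LLf_fls: "fps_to_fls (LLf Uc A) = Tl (Tl (Tl (fps_to_fls A))) + (3 * Ul) * Tl (Tl (fps_to_fls A)) + (3 * Ul^2-1/4) * Tl (fps_to_fls A)
   - (-27 * fls_X/(1-4 * fls_X)^3) * (Tl (Tl (Tl (fps_to_fls A))) + (3 * Ul+1/2) * Tl (Tl (fps_to_fls A)) + (3 * Ul^2+Ul-1/36) * Tl (fps_to_fls A)
   + ((Ul-1/6) * (Ul+1/6) * (Ul+1/2)) * fps_to_fls A)"
  unfolding LLf_def
  by (simp only: fps_to_fls_minus fps_to_fls_plus fls_times_fps_to_fls Tf_fls Zf_fls fps_const_to_fls flsc Ul_def[symmetric])

lemma LLf_EG: "LLf Uc (Ec  *  Gc) = 0"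
proof -
  have thU: "thl Ul = 0" unfolding Ul_def by (rule thl_const)
  have L: "(Tl (Tl (Tl (El * Gl))) + (3 * Ul) * Tl (Tl (El * Gl)) + (3 * Ul^2-1/4) * Tl (El * Gl) - (-27 * fls_X/(1-4 * fls_X)^3) * (Tl (Tl (Tl (El * Gl))) + (3 * Ul+1/2) * Tl (Tl (El * Gl)) + (3 * Ul^2+Ul-1/36) * Tl (El * Gl) + ((Ul-1/6) * (Ul+1/6) * (Ul+1/2)) * (El * Gl))) * (1+8 * fls_X)^3 = El  *  fps_to_fls MG"
    unfolding MG_fls
    by (rule fd.LLfinal[where x=fls_X and u=Ul and e=El and gA=Gl and gB="thl Gl" and gC="thl (thl Gl)" and gD="thl (thl (thl Gl))" and gE="thl (thl (thl (thl Gl)))" and T=Tl,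
          OF thU thl_X th_El refl refl refl refl nz18 nz14 Tl_def])
  have "fps_to_fls (LLf Uc (Ec  *  Gc))  *  (1+8 * fls_X)^3 = 0"
    unfolding LLf_fls fls_times_fps_to_fls El_def[symmetric] Gl_def[symmetric] L MG_zero by simp
  hence "fps_to_fls (LLf Uc (Ec  *  Gc)) = 0" using nz18 by simp
  thus ?thesis by simp
qed

lemma Fc0: "Fc $ 0 = 1" by (simp add: Fc_def fr_def hc_0)
lemma EG0: "(Ec  *  Gc) $ 0 = 1" by (simp add: Ec_def Gc_def gr_def hc_0 er0)

lemma indicial_nz: "n \<ge> 1 \<Longrightarrow> ((of_nat n)^3 + 3 * Uc * (of_nat n)^2 + (3 * Uc^2 - 1/4) * (of_nat n) :: complex) \<noteq> 0"
proof -
  assume n: "n \<ge> 1"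
  have b1: "(1 + 3 * u/2 + c/2) + real (n - 1) \<noteq> 0" by (rule shift_nz[OF nb1])
  have b2: "(1 + 3 * u/2 - c/2) + real (n - 1) \<noteq> 0" by (rule shift_nz[OF nb2])
  have e: "(1 + 3 * u/2 + c/2 + real (n - 1))  *  (1 + 3 * u/2 - c/2 + real (n - 1)) = (real n)^2 + 3 * u * real n + 3 * u^2 - 1/4"
  proof -
    have "(1 + 3 * u/2 + c/2 + real (n - 1))  *  (1 + 3 * u/2 - c/2 + real (n - 1)) = (real n)^2 + 3 * u * real n + 9 * u^2/4 - c^2/4"
      using n by (simp add: of_nat_diff algebra_simps power2_eq_square)
    also have "\<dots> = (real n)^2 + 3 * u * real n + 3 * u^2 - 1/4" using c2 by (simp add: field_simps)
    finally show ?thesis .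
  qed
  have r: "real n  *  ((real n)^2 + 3 * u * real n + 3 * u^2 - 1/4) \<noteq> 0" using n b1 b2 unfolding e[symmetric] by simp
  have eqc: "(of_nat n)^3 + 3 * Uc * (of_nat n)^2 + (3 * Uc^2 - 1/4) * (of_nat n) = complex_of_real (real n  *  ((real n)^2 + 3 * u * real n + 3 * u^2 - 1/4))"
    unfolding Uc_def by (simp, (algebra)?)
  show ?thesis unfolding eqc of_real_eq_0_iff by (rule r)
qed

lemma main_fps: "Fc oo Zf = Ec  *  Gc"
proof -
  have "LLf Uc ((Fc oo Zf) - Ec  *  Gc) = LLf Uc (Fc oo Zf) - LLf Uc (Ec  *  Gc)" by (rule LLf_diff)
  also have "\<dots> = 0" using LLf_F LLf_EG by simp
  finally have "LLf Uc ((Fc oo Zf) - Ec  *  Gc) = 0" .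
  moreover have "((Fc oo Zf) - Ec  *  Gc) $ 0 = 0" using Fc0 EG0 by simp
  ultimately have "(Fc oo Zf) - Ec  *  Gc = 0" using uniq[OF indicial_nz] by blast
  thus ?thesis by simp
qed

end

lemma ratio_bound:
  fixes f D N :: "nat \<Rightarrow> real"
  assumes rec: "\<And>n. f (Suc n)  *  D n = f n  *  N n" and Dnz: "\<And>n. D n \<noteq> 0"
      and ev: "eventually (\<lambda>n. \<bar>N n\<bar> \<le> K  *  \<bar>D n\<bar>) sequentially"
  shows "eventually (\<lambda>n. \<bar>f (Suc n)\<bar> \<le> K  *  \<bar>f n\<bar>) sequentially"
  using ev
proof eventually_elim
  case (elim n)
  have "\<bar>f (Suc n)\<bar>  *  \<bar>D n\<bar> = \<bar>f n\<bar>  *  \<bar>N n\<bar>" using rec[of n] by (metis abs_mult)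
  also have "\<dots> \<le> \<bar>f n\<bar>  *  (K  *  \<bar>D n\<bar>)" using elim by (intro mult_left_mono) auto
  finally have "\<bar>f (Suc n)\<bar>  *  \<bar>D n\<bar> \<le> (K  *  \<bar>f n\<bar>)  *  \<bar>D n\<bar>" by (simp add: algebra_simps)
  thus ?case using Dnz[of n] by simp
qed

lemma ev_prod2: "eventually (\<lambda>n. \<bar>(real n + a1) * (real n + a2)\<bar> \<le> 4  *  \<bar>(real n + b1) * (real n + b2)\<bar>) sequentially"
  using ev_ratio[of a1 b1] ev_ratio[of a2 b2]
proof eventually_elim
  case (elim n)
  have "\<bar>(real n + a1) * (real n + a2)\<bar> = \<bar>real n + a1\<bar>  *  \<bar>real n + a2\<bar>" by (simp add: abs_mult)
  also have "\<dots> \<le> (2  *  \<bar>real n + b1\<bar>)  *  (2  *  \<bar>real n + b2\<bar>)" using elim by (intro mult_mono) auto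
  also have "\<dots> = 4  *  \<bar>(real n + b1) * (real n + b2)\<bar>" by (simp add: abs_mult)
  finally show ?case .
qed

lemma ev_prod3: "eventually (\<lambda>n. \<bar>(real n + a1) * (real n + a2) * (real n + a3)\<bar> \<le> 8  *  \<bar>(real n + b1) * (real n + b2) * (real n + b3)\<bar>) sequentially"
  using ev_prod2[of a1 a2 b1 b2] ev_ratio[of a3 b3]
proof eventually_elim
  case (elim n)
  have "\<bar>(real n + a1) * (real n + a2) * (real n + a3)\<bar> = \<bar>(real n + a1) * (real n + a2)\<bar>  *  \<bar>real n + a3\<bar>" by (simp add: abs_mult)
  also have "\<dots> \<le> (4  *  \<bar>(real n + b1) * (real n + b2)\<bar>)  *  (2  *  \<bar>real n + b3\<bar>)" using elim by (intro mult_mono) auto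
  also have "\<dots> = 8  *  \<bar>(real n + b1) * (real n + b2) * (real n + b3)\<bar>" by (simp add: abs_mult)
  finally show ?case .
qed

lemma ev_prod4: "eventually (\<lambda>n. \<bar>(real n + a1) * (real n + a2) * (real n + a3) * (real n + a4)\<bar> \<le> 16  *  \<bar>(real n + b1) * (real n + b2) * (real n + b3) * (real n + b4)\<bar>) sequentially"
  using ev_prod3[of a1 a2 a3 b1 b2 b3] ev_ratio[of a4 b4]
proof eventually_elim
  case (elim n)
  have "\<bar>(real n + a1) * (real n + a2) * (real n + a3) * (real n + a4)\<bar> = \<bar>(real n + a1) * (real n + a2) * (real n + a3)\<bar>  *  \<bar>real n + a4\<bar>" by (simp add: abs_mult)
  also have "\<dots> \<le> (8  *  \<bar>(real n + b1) * (real n + b2) * (real n + b3)\<bar>)  *  (2  *  \<bar>real n + b4\<bar>)" using elim by (intro mult_mono) auto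
  also have "\<dots> = 16  *  \<bar>(real n + b1) * (real n + b2) * (real n + b3) * (real n + b4)\<bar>" by (simp add: abs_mult)
  finally show ?case .
qed

lemma ereal_pos_below: "0 < (R::ereal) \<Longrightarrow> \<exists>r>0. ereal r < R"
proof (cases R)
  case (real r) assume "0 < R" thus ?thesis using real by (intro exI[of _ "r/2"]) auto
next
  case PInf thus ?thesis by (intro exI[of _ 1]) auto
next
  case MInf assume "0 < R" thus ?thesis using MInf by simp
qed

lemma eval_real:
  fixes f :: "nat \<Rightarrow> real"
  assumes "ereal \<bar>t\<bar> < fps_conv_radius (Abs_fps (\<lambda>n. complex_of_real (f n)))"
  shows "eval_fps (Abs_fps (\<lambda>n. complex_of_real (f n))) (complex_of_real t) = complex_of_real (\<Sum>n. f n  *  t^n)"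
proof -
  have "summable (\<lambda>n. norm (Abs_fps (\<lambda>n. complex_of_real (f n)) $ n  *  complex_of_real t ^ n))"
    using assms by (intro norm_summable_fps) simp
  hence "summable (\<lambda>n. norm (f n  *  t^n))" by (simp add: norm_mult norm_power abs_mult power_abs)
  hence "summable (\<lambda>n. f n  *  t^n)" by (rule summable_norm_cancel)
  hence "(\<lambda>n. f n  *  t^n) sums (\<Sum>n. f n  *  t^n)" by (rule summable_sums)
  hence "(\<lambda>n. complex_of_real (f n  *  t^n)) sums complex_of_real (\<Sum>n. f n  *  t^n)" by (rule sums_of_real)
  hence "(\<lambda>n. complex_of_real (f n)  *  complex_of_real t ^ n) sums complex_of_real (\<Sum>n. f n  *  t^n)" by simp
  thus ?thesis unfolding eval_fps_def by (simp add: sums_iff)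
qed

context params
begin

lemma Ar_prod: "Ar (real n) = (real n + 1) * (real n + (1 + 3 * u/2 + c/2)) * (real n + (1 + 3 * u/2 - c/2))"
proof -
  have "Ar (real n) = real (Suc n)  *  ((1 + 3 * u/2 + c/2 + real n)  *  ((1 + 3 * u/2 - c/2 + real n)  *  1))"
    using bprod[of n] unfolding Ar_def by simp
  also have "\<dots> = (real n + 1) * (real n + (1 + 3 * u/2 + c/2)) * (real n + (1 + 3 * u/2 - c/2))"
    by (simp only: of_nat_Suc ac_simps mult_1_right)
  finally show ?thesis .
qed

lemma Ar_nz: "Ar (real n) \<noteq> 0"
proof -
  have a: "real n + (1 + 3 * u/2 + c/2) \<noteq> 0" using shift_nz[OF nb1, of n] by (metis add.commute)
  have b: "real n + (1 + 3 * u/2 - c/2) \<noteq> 0" using shift_nz[OF nb2, of n] by (metis add.commute)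
  have c: "real n + 1 \<noteq> 0" by simp
  show ?thesis unfolding Ar_prod using a b c by auto
qed

lemma Fc_radius: "fps_conv_radius Fc > 0"
proof -
  have "eventually (\<lambda>n. \<bar>fr (Suc n)\<bar> \<le> 8  *  \<bar>fr n\<bar>) sequentially"
  proof (rule ratio_bound[where D="\<lambda>n. Ar (real n)" and N="\<lambda>n. Fn (real n)"])
    show "\<And>n. fr (Suc n)  *  Ar (real n) = fr n  *  Fn (real n)" by (rule fr_rec)
    show "\<And>n. Ar (real n) \<noteq> 0" by (rule Ar_nz)
    show "eventually (\<lambda>n. \<bar>Fn (real n)\<bar> \<le> 8  *  \<bar>Ar (real n)\<bar>) sequentially"
      using ev_prod3[of "u - 1/6" "u + 1/6" "u + 1/2" 1 "1 + 3 * u/2 + c/2" "1 + 3 * u/2 - c/2"]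
      unfolding Ar_prod Fn_def by (simp add: algebra_simps)
  qed
  thus ?thesis unfolding Fc_def by (intro radius_pos[of 8]) auto
qed

lemma gr_rec: "gr (Suc n)  *  ((real n + 1) * (real n + (1 + 3 * u/2 + c/2)) * (real n + (1 + 3 * u/2 - c/2)) * (real n + (u - 1/2)))
   = gr n  *  ((real n + (3 * u - 1/2)) * (real n + (-1/2 - c)) * (real n + (-1/2 + c)) * (real n + (3/2 + u)))"
proof -
  have "\<forall>b\<in>set [1 + 3 * u/2 + c/2, 1 + 3 * u/2 - c/2, u - 1/2]. \<not> nonpos_int b" using nb1 nb2 nb3 by simp
  from hc_Suc[OF this, of "[3 * u - 1/2, -1/2 - c, -1/2 + c, 3/2 + u]" n]
  have h: "gr (Suc n)  *  (real (Suc n)  *  ((1 + 3 * u/2 + c/2 + real n)  *  ((1 + 3 * u/2 - c/2 + real n)  *  ((u - 1/2 + real n)  *  1))))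
     = gr n  *  ((3 * u - 1/2 + real n)  *  ((-1/2 - c + real n)  *  ((-1/2 + c + real n)  *  ((3/2 + u + real n)  *  1))))"
    unfolding gr_def by simp
  have e1: "real (Suc n)  *  ((1 + 3 * u/2 + c/2 + real n)  *  ((1 + 3 * u/2 - c/2 + real n)  *  ((u - 1/2 + real n)  *  1)))
     = (real n + 1) * (real n + (1 + 3 * u/2 + c/2)) * (real n + (1 + 3 * u/2 - c/2)) * (real n + (u - 1/2))" by (simp only: of_nat_Suc ac_simps mult_1_right)
  have e2: "(3 * u - 1/2 + real n)  *  ((-1/2 - c + real n)  *  ((-1/2 + c + real n)  *  ((3/2 + u + real n)  *  1)))
     = (real n + (3 * u - 1/2)) * (real n + (-1/2 - c)) * (real n + (-1/2 + c)) * (real n + (3/2 + u))" by (simp only: ac_simps mult_1_right)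
  show ?thesis using h unfolding e1 e2 .
qed

lemma Gc_radius: "fps_conv_radius Gc > 0"
proof -
  have "eventually (\<lambda>n. \<bar>gr (Suc n)\<bar> \<le> 16  *  \<bar>gr n\<bar>) sequentially"
  proof (rule ratio_bound[where f=gr and D="\<lambda>n. (real n + 1) * (real n + (1 + 3 * u/2 + c/2)) * (real n + (1 + 3 * u/2 - c/2)) * (real n + (u - 1/2))"
      and N="\<lambda>n. (real n + (3 * u - 1/2)) * (real n + (-1/2 - c)) * (real n + (-1/2 + c)) * (real n + (3/2 + u))"])
    show "\<And>n. gr (Suc n)  *  ((real n + 1) * (real n + (1 + 3 * u/2 + c/2)) * (real n + (1 + 3 * u/2 - c/2)) * (real n + (u - 1/2)))
   = gr n  *  ((real n + (3 * u - 1/2)) * (real n + (-1/2 - c)) * (real n + (-1/2 + c)) * (real n + (3/2 + u)))" by (rule gr_rec)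
    show "\<And>n. (real n + 1) * (real n + (1 + 3 * u/2 + c/2)) * (real n + (1 + 3 * u/2 - c/2)) * (real n + (u - 1/2)) \<noteq> 0"
      using shift_nz[OF nb1] shift_nz[OF nb2] shift_nz[OF nb3] by (simp add: add.commute)
    show "eventually (\<lambda>n. \<bar>(real n + (3 * u - 1/2)) * (real n + (-1/2 - c)) * (real n + (-1/2 + c)) * (real n + (3/2 + u))\<bar>
           \<le> 16  *  \<bar>(real n + 1) * (real n + (1 + 3 * u/2 + c/2)) * (real n + (1 + 3 * u/2 - c/2)) * (real n + (u - 1/2))\<bar>) sequentially"
      by (rule ev_prod4)
  qed
  thus ?thesis unfolding Gc_def by (intro radius_pos[of 16]) auto
qed

lemma Ec_radius: "fps_conv_radius Ec > 0"
proof -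
  have "eventually (\<lambda>n. \<bar>er (Suc n)\<bar> \<le> 8  *  \<bar>er n\<bar>) sequentially"
  proof (rule ratio_bound[where D="\<lambda>n. real n + 1" and N="\<lambda>n. (-4)  *  ((3 * u - 1/2) - real n)"])
    show "\<And>n. er (Suc n)  *  (real n + 1) = er n  *  ((-4)  *  ((3 * u - 1/2) - real n))" using er_rec by (simp add: algebra_simps)
    show "\<And>n. real n + 1 \<noteq> 0" by simp
    show "eventually (\<lambda>n. \<bar>(-4)  *  ((3 * u - 1/2) - real n)\<bar> \<le> 8  *  \<bar>real n + 1\<bar>) sequentially"
      using ev_ratio[of "-(3 * u - 1/2)" 1]
    proof eventually_elim
      case (elim n)
      have eq: "(-4)  *  ((3 * u - 1/2) - real n) = 4  *  (real n + -(3 * u - 1/2))" by (simp add: algebra_simps)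
      have "\<bar>(-4)  *  ((3 * u - 1/2) - real n)\<bar> = 4  *  \<bar>real n + -(3 * u - 1/2)\<bar>" unfolding eq abs_mult by simp
      thus ?case using elim by simp
    qed
  qed
  thus ?thesis unfolding Ec_def by (intro radius_pos[of 8]) auto
qed

end

context params
begin

lemma zc_exp: "(\<lambda>y::complex. -27  *  y  *  inverse ((1 - 4 * y)^3)) has_fps_expansion Zf"
  unfolding Zf_def by (intro fps_expansion_intros) (simp add: p14_3)

lemma z_bound:
  fixes x r :: real assumes x8: "\<bar>x\<bar> < 1/8" and xr: "216  *  \<bar>x\<bar> < r"
  shows "\<bar>-27 * x/(1-4 * x)^3\<bar> < r"
proof -
  have w: "1 - 4 * x \<ge> 1/2" using x8 by (simp add: abs_less_iff)
  have w3: "(1 - 4 * x)^3 \<ge> (1/2)^3" using w by (intro power_mono) auto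
  have h8: "(1/2::real)^3 = 1/8" by (simp add: power3_eq_cube)
  have w3': "(1 - 4 * x)^3 \<ge> 1/8" using w3 unfolding h8 .
  have pos1: "1 - 4 * x > 0" using w by linarith
  have pos: "(1-4 * x)^3 > 0" using pos1 by simp
  have "\<bar>-27 * x/(1-4 * x)^3\<bar> = 27 * \<bar>x\<bar>/(1-4 * x)^3" using abs_of_pos[OF pos] pos1 by (simp add: abs_mult abs_divide)
  also have "\<dots> \<le> 27 * \<bar>x\<bar>/(1/8)" using w3' pos pos1 by (intro divide_left_mono) auto
  also have "\<dots> = 216 * \<bar>x\<bar>" by simp
  finally show ?thesis using xr by simp
qed

lemma main_uc: "\<exists>\<epsilon>>0. \<forall>x::real. \<bar>x\<bar> < \<epsilon> \<longrightarrow>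
    hypergeom [u - 1/6, u + 1/6, u + 1/2] [1 + 3 * u/2 + c/2, 1 + 3 * u/2 - c/2] (-27 * x/(1-4 * x)^3)
    = (1-4 * x) powr (3 * u - 1/2)  *  hypergeom [3 * u - 1/2, -1/2 - c, -1/2 + c, 3/2 + u] [1 + 3 * u/2 + c/2, 1 + 3 * u/2 - c/2, u - 1/2] x"
proof -
  define zc where "zc = (\<lambda>y::complex. -27  *  y  *  inverse ((1 - 4 * y)^3))"
  have comp: "(eval_fps Fc \<circ> zc) has_fps_expansion (Ec  *  Gc)"
    using has_fps_expansion_compose[OF eval_fps_has_fps_expansion[OF Fc_radius] zc_exp Zf0]
    unfolding zc_def main_fps .
  hence "eventually (\<lambda>y. eval_fps (Ec  *  Gc) y = (eval_fps Fc \<circ> zc) y) (nhds 0)"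
    unfolding has_fps_expansion_def by simp
  then obtain d where d: "d > 0" "\<And>y. dist y 0 < d \<Longrightarrow> eval_fps (Ec  *  Gc) y = (eval_fps Fc \<circ> zc) y"
    unfolding eventually_nhds_metric by blast
  obtain rF where rF: "rF > 0" "ereal rF < fps_conv_radius Fc" using ereal_pos_below[OF Fc_radius] by blast
  obtain rG where rG: "rG > 0" "ereal rG < fps_conv_radius Gc" using ereal_pos_below[OF Gc_radius] by blast
  obtain rE where rE: "rE > 0" "ereal rE < fps_conv_radius Ec" using ereal_pos_below[OF Ec_radius] by blast
  define \<epsilon> where "\<epsilon> = min d (min (1/8) (min (rF/216) (min rG rE)))"
  have epos: "\<epsilon> > 0" unfolding \<epsilon>_def using d rF rG rE by simp
  show ?thesis
  proof (intro exI[of _ \<epsilon>] conjI allI impI epos)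
    fix x :: real assume x: "\<bar>x\<bar> < \<epsilon>"
    have xd: "\<bar>x\<bar> < d" and x8: "\<bar>x\<bar> < 1/8" and xF: "216 * \<bar>x\<bar> < rF" and xG: "\<bar>x\<bar> < rG" and xE: "\<bar>x\<bar> < rE"
      using x unfolding \<epsilon>_def by auto
    define z where "z = -27 * x/(1-4 * x)^3"
    have zF: "\<bar>z\<bar> < rF" unfolding z_def by (rule z_bound[OF x8 xF])
    have zrad: "ereal \<bar>z\<bar> < fps_conv_radius Fc" using less_trans[OF _ rF(2), of "ereal \<bar>z\<bar>"] zF by simp
    have xGrad: "ereal \<bar>x\<bar> < fps_conv_radius Gc" using less_trans[OF _ rG(2), of "ereal \<bar>x\<bar>"] xG by simp
    have xErad: "ereal \<bar>x\<bar> < fps_conv_radius Ec" using less_trans[OF _ rE(2), of "ereal \<bar>x\<bar>"] xE by simp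
    have L: "complex_of_real (hypergeom [u - 1/6, u + 1/6, u + 1/2] [1 + 3 * u/2 + c/2, 1 + 3 * u/2 - c/2] z) = eval_fps Fc (complex_of_real z)"
      unfolding hypergeom_hc fr_def[symmetric] Fc_def using eval_real[of z fr] zrad unfolding Fc_def by simp
    have zz: "complex_of_real z = zc (complex_of_real x)" unfolding z_def zc_def by (simp add: divide_inverse)
    have "eval_fps Fc (complex_of_real z) = eval_fps (Ec  *  Gc) (complex_of_real x)"
      using d(2)[of "complex_of_real x"] xd unfolding zz by (simp add: dist_norm)
    also have "\<dots> = eval_fps Ec (complex_of_real x)  *  eval_fps Gc (complex_of_real x)"
      using xGrad xErad by (intro eval_fps_mult) auto
    also have "eval_fps Gc (complex_of_real x) = complex_of_real (hypergeom [3 * u - 1/2, -1/2 - c, -1/2 + c, 3/2 + u] [1 + 3 * u/2 + c/2, 1 + 3 * u/2 - c/2, u - 1/2] x)"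
      unfolding hypergeom_hc gr_def[symmetric] Gc_def using eval_real[of x gr] xGrad unfolding Gc_def by simp
    also have "eval_fps Ec (complex_of_real x) = complex_of_real ((1-4 * x) powr (3 * u - 1/2))"
    proof -
      have "\<bar>-4 * x\<bar> < 1" using x8 by simp
      have eqf: "(\<lambda>n. ((3 * u - 1/2) gchoose n)  *  (-4 * x)^n) = (\<lambda>n. er n  *  x^n)"
        unfolding er_def by (rule ext) (simp only: power_mult_distrib mult.assoc)
      have "(\<lambda>n. er n  *  x^n) sums (1 + -4 * x) powr (3 * u - 1/2)"
        using gen_binomial_real[OF \<open>\<bar>-4 * x\<bar> < 1\<close>, of "3 * u - 1/2"] unfolding eqf .
      hence "(\<lambda>n. er n  *  x^n) sums (1 - 4 * x) powr (3 * u - 1/2)" by simp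
      hence "(\<Sum>n. er n  *  x^n) = (1 - 4 * x) powr (3 * u - 1/2)" by (simp add: sums_iff)
      with eval_real[of x er] xErad show ?thesis unfolding Ec_def by simp
    qed
    finally have "complex_of_real (hypergeom [u - 1/6, u + 1/6, u + 1/2] [1 + 3 * u/2 + c/2, 1 + 3 * u/2 - c/2] z)
      = complex_of_real ((1-4 * x) powr (3 * u - 1/2)  *  hypergeom [3 * u - 1/2, -1/2 - c, -1/2 + c, 3/2 + u] [1 + 3 * u/2 + c/2, 1 + 3 * u/2 - c/2, u - 1/2] x)"
      unfolding L by simp
    thus "hypergeom [u - 1/6, u + 1/6, u + 1/2] [1 + 3 * u/2 + c/2, 1 + 3 * u/2 - c/2] (-27 * x/(1-4 * x)^3)
      = (1-4 * x) powr (3 * u - 1/2)  *  hypergeom [3 * u - 1/2, -1/2 - c, -1/2 + c, 3/2 + u] [1 + 3 * u/2 + c/2, 1 + 3 * u/2 - c/2, u - 1/2] x"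
      unfolding z_def of_real_eq_iff .
  qed
qed

end

theorem mainTheorem13:
  fixes \<theta> :: real
  assumes "\<not> nonpos_int (1 + sin (\<theta> + pi/6))"
      and "\<not> nonpos_int (1 + sin (\<theta> - pi/6))"
      and "\<not> nonpos_int (-1/2 + sqrt 3 / 3  *  sin \<theta>)"
  shows "\<exists>\<epsilon>>0. \<forall>x::real. \<bar>x\<bar> < \<epsilon> \<longrightarrow>
    hypergeom [-1/6 + sqrt 3 / 3  *  sin \<theta>, 1/6 + sqrt 3 / 3  *  sin \<theta>, 1/2 + sqrt 3 / 3  *  sin \<theta>]
              [1 + sin (\<theta> + pi/6), 1 + sin (\<theta> - pi/6)]
              (- 27  *  x / (1 - 4  *  x) ^ 3)
    = (1 - 4  *  x) powr (-1/2 + sqrt 3  *  sin \<theta>)  * 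
      hypergeom [-1/2 + sqrt 3  *  sin \<theta>, -1/2 - cos \<theta>, -1/2 + cos \<theta>, 3/2 + sqrt 3 / 3  *  sin \<theta>]
                [1 + sin (\<theta> + pi/6), 1 + sin (\<theta> - pi/6), -1/2 + sqrt 3 / 3  *  sin \<theta>]
                x"
proof -
  define u where "u = sqrt 3 / 3  *  sin \<theta>"
  define c where "c = cos \<theta>"
  have s3: "sqrt 3  *  sqrt 3 = (3::real)" by simp
  have su: "sqrt 3  *  sin \<theta> = 3  *  u" unfolding u_def by simp
  have uc: "3 * u^2 + c^2 = 1"
  proof -
    have "3 * u^2 = (sqrt 3  *  sqrt 3) / 3  *  (sin \<theta>)^2" unfolding u_def by (simp add: power2_eq_square)
    also have "\<dots> = (sin \<theta>)^2" by simp
    finally show ?thesis unfolding c_def by simp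
  qed
  have e1: "1 + sin (\<theta> + pi/6) = 1 + 3 * u/2 + c/2"
    unfolding sin_add cos_30 sin_30 u_def c_def by (simp add: algebra_simps)
  have e2: "1 + sin (\<theta> - pi/6) = 1 + 3 * u/2 - c/2"
    unfolding sin_diff cos_30 sin_30 u_def c_def by (simp add: algebra_simps)
  have e3: "-1/2 + sqrt 3 / 3  *  sin \<theta> = u - 1/2" unfolding u_def by simp
  interpret params u c
  proof
    show "3 * u^2 + c^2 = 1" by (rule uc)
    show "\<not> nonpos_int (1 + 3 * u/2 + c/2)" using assms(1) unfolding e1 .
    show "\<not> nonpos_int (1 + 3 * u/2 - c/2)" using assms(2) unfolding e2 .
    show "\<not> nonpos_int (u - 1/2)" using assms(3) unfolding e3 .
  qed
  have L1: "[-1/6 + sqrt 3 / 3  *  sin \<theta>, 1/6 + sqrt 3 / 3  *  sin \<theta>, 1/2 + sqrt 3 / 3  *  sin \<theta>] = [u - 1/6, u + 1/6, u + 1/2]"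
    unfolding u_def by simp
  have L2: "[1 + sin (\<theta> + pi/6), 1 + sin (\<theta> - pi/6)] = [1 + 3 * u/2 + c/2, 1 + 3 * u/2 - c/2]"
    unfolding e1 e2 ..
  have L3: "[-1/2 + sqrt 3  *  sin \<theta>, -1/2 - cos \<theta>, -1/2 + cos \<theta>, 3/2 + sqrt 3 / 3  *  sin \<theta>] = [3 * u - 1/2, -1/2 - c, -1/2 + c, 3/2 + u]"
    unfolding su c_def u_def by simp
  have L4: "[1 + sin (\<theta> + pi/6), 1 + sin (\<theta> - pi/6), -1/2 + sqrt 3 / 3  *  sin \<theta>] = [1 + 3 * u/2 + c/2, 1 + 3 * u/2 - c/2, u - 1/2]"
    unfolding e1 e2 e3 ..
  have E: "-1/2 + sqrt 3  *  sin \<theta> = 3 * u - 1/2" unfolding su by simp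
  have Z: "\<And>x::real. - 27  *  x / (1 - 4  *  x) ^ 3 = -27 * x/(1-4 * x)^3" by simp
  show ?thesis unfolding L1 L2 L3 L4 unfolding E using main_uc by simp
qed


end
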